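(* Let $\mu_X\in\mathbb R$, $\sigma_X>0$, $R,R_c\ge0$, $P\ge0$. For any distribution $p_{\hat X}$ on $\mathbb R$ with finite second moment and mean $\mu_{\hat X}$ such that $W_2^2(\mathcal N(\mu_X,\sigma_X^2),p_{\hat X})\le P$ (which implies $P\ge(\mu_X-\mu_{\hat X})^2$), we have $$D(R+R_c|p_{\hat X})\ge\Big(\big(\sigma_Xe^{-(R+R_c)}-\sqrt{P-(\mu_X-\mu_{\hat X})^2}\big)_+\Big)^2.$$
   Context: All logarithms are natural; $(a)_+:=\max\{a,0\}$. $W_2^2(p,q):=\inf_{\pi\in\Pi(p,q)}\mathbb E_\pi[(A-B)^2]$, where $\Pi(p,q)$ is the set of couplings of $p$ and $q$. For a distribution $p$ of a real random variable $Z$ with finite second moment and $r\ge0$, $D(r|p):=\min_{p_{V|Z}:\,I(Z;V)\le r}\mathbb E[(Z-V)^2]$ (quadratic distortion-rate function). *)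

theory Defs
  imports "HOL-Probability.Probability"
begin

definition real_distr :: "real measure \<Rightarrow> bool" where
  "real_distr p \<longleftrightarrow> prob_space p \<and> sets p = sets borel"

definition joint_distr :: "(real \<times> real) measure \<Rightarrow> bool" where
  "joint_distr \<pi> \<longleftrightarrow> prob_space \<pi> \<and> sets \<pi> = sets (borel \<Otimes>\<^sub>M borel)"

definition couplings :: "real measure \<Rightarrow> real measure \<Rightarrow> (real \<times> real) measure set" where
  "couplings p q = {\<pi>. joint_distr \<pi> \<and> distr \<pi> borel fst = p \<and> distr \<pi> borel snd = q}"

definition W2sq :: "real measure \<Rightarrow> real measure \<Rightarrow> real" where
  "W2sq p q = (INF \<pi>\<in>couplings p q. \<integral>x. (fst x - snd x)\<^sup>2 \<partial>\<pi>)"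

definition mutual_info :: "(real \<times> real) measure \<Rightarrow> ereal" where
  "mutual_info \<pi> =
    (let \<nu> = distr \<pi> borel fst \<Otimes>\<^sub>M distr \<pi> borel snd;
         f = (\<lambda>x. ln (enn2real (RN_deriv \<nu> \<pi> x)))
     in if absolutely_continuous \<nu> \<pi> \<and> integrable \<pi> f
        then ereal (\<integral>x. f x \<partial>\<pi>) else \<infinity>)"

text \<open>Quadratic distortion-rate function D(r|p): infimum of E[(Z-V)^2] over joint laws of
  (Z,V) with Z ~ p and I(Z;V) \<le> r (equivalently over channels p_{V|Z}).\<close>
definition distortion_rate :: "real \<Rightarrow> real measure \<Rightarrow> real" where
  "distortion_rate r p = Inf {\<integral>x. (fst x - snd x)\<^sup>2 \<partial>\<pi> | \<pi>.
      joint_distr \<pi> \<and> distr \<pi> borel fst = p \<and> mutual_info \<pi> \<le> ereal r \<and>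
      integrable \<pi> (\<lambda>x. (fst x - snd x)\<^sup>2)}"

definition gaussian :: "real \<Rightarrow> real \<Rightarrow> real measure" where
  "gaussian \<mu> \<sigma> = density lborel (normal_density \<mu> \<sigma>)"

end

theory Submission
  imports Defs
begin

locale gauss =
  fixes \<mu> \<sigma> :: real
  assumes \<sigma>_pos: "\<sigma> > 0"
begin

abbreviation "N \<equiv> gaussian \<mu> \<sigma>"

lemma N_prob: "prob_space N"
  unfolding gaussian_def using \<sigma>_pos by (rule prob_space_normal_density)

lemma N_sets[simp, measurable_cong]: "sets N = sets borel"
  by (simp add: gaussian_def)

lemma N_space[simp]: "space N = UNIV"
  by (simp add: gaussian_def)

lemma N_rd: "real_distribution N"
  unfolding real_distribution_def real_distribution_axioms_def using N_prob by simp

definition Phi :: "real \<Rightarrow> real" where "Phi x = measure N {..x}"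

lemma Phi_cdf: "Phi = cdf N"
  by (simp add: Phi_def[abs_def] cdf_def)

lemma emeasure_N_Ioc_pos:
  assumes "a < b" shows "emeasure N {a<..b} > 0"
proof (rule ccontr)
  assume "\<not> ?thesis"
  hence "emeasure N {a<..b} = 0" by (simp add: not_gr_zero)
  hence "(\<integral>\<^sup>+x. ennreal (normal_density \<mu> \<sigma> x) * indicator {a<..b} x \<partial>lborel) = 0"
    by (simp add: gaussian_def emeasure_density)
  hence "AE x in lborel. ennreal (normal_density \<mu> \<sigma> x) * indicator {a<..b} x = 0"
    by (subst (asm) nn_integral_0_iff_AE) auto
  hence "AE x in lborel. x \<notin> {a<..b}"
  proof eventually_elim
    case (elim x)
    have "normal_density \<mu> \<sigma> x > 0" by (rule normal_density_pos[OF \<sigma>_pos])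
    with elim show ?case by (auto split: split_indicator)
  qed
  hence "emeasure lborel {a<..b} = 0"
  proof -
    have e: "{x \<in> space lborel. \<not> (x \<notin> {a<..b})} = {a<..b}" by auto
    show ?thesis using AE_iff_measurable[OF _ e] \<open>AE x in lborel. x \<notin> {a<..b}\<close> by simp
  qed
  thus False using assms by simp
qed

lemma Phi_diff: "a < b \<Longrightarrow> Phi b - Phi a = measure N {a<..b}"
  unfolding Phi_cdf using N_rd by (intro finite_borel_measure.cdf_diff_eq real_distribution.finite_borel_measure_M)

lemma Phi_strict: "a < b \<Longrightarrow> Phi a < Phi b"
proof -
  assume ab: "a < b"
  interpret prob_space N by (rule N_prob)
  have "measure N {a<..b} > 0" using emeasure_N_Ioc_pos[OF ab] by (simp add: emeasure_eq_measure)
  thus ?thesis using Phi_diff[OF ab] by simp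
qed

lemma Phi_mono: "a \<le> b \<Longrightarrow> Phi a \<le> Phi b"
  using Phi_strict by (cases "a = b") (auto intro: less_imp_le)

lemma Phi_le_iff: "Phi a \<le> Phi b \<longleftrightarrow> a \<le> b"
  using Phi_strict Phi_mono by (meson not_le)

lemma Phi_pos: "Phi x > 0"
proof -
  have "Phi (x - 1) \<ge> 0" unfolding Phi_def by simp
  thus ?thesis using Phi_strict[of "x-1" x] by simp
qed

lemma Phi_less_1: "Phi x < 1"
proof -
  interpret prob_space N by (rule N_prob)
  have "Phi (x + 1) \<le> 1" unfolding Phi_def by simp
  thus ?thesis using Phi_strict[of x "x+1"] by simp
qed

lemma Phi_cont: "isCont Phi x"
proof -
  have "emeasure N {x} = 0"
  proof -
    have "(\<integral>\<^sup>+y. ennreal (normal_density \<mu> \<sigma> y) * indicator {x} y \<partial>lborel) = 0"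
    proof (subst nn_integral_0_iff_AE)
      show "AE y in lborel. ennreal (normal_density \<mu> \<sigma> y) * indicator {x} y = 0"
        using AE_lborel_singleton[of x] by eventually_elim auto
    qed auto
    thus ?thesis by (simp add: gaussian_def emeasure_density)
  qed
  hence "measure N {x} = 0" by (simp add: measure_def)
  thus ?thesis unfolding Phi_cdf using N_rd
    by (simp add: finite_borel_measure.isCont_cdf real_distribution.finite_borel_measure_M)
qed

lemma Phi_lim_bot: "(Phi \<longlongrightarrow> 0) at_bot"
  unfolding Phi_cdf using N_rd
  by (simp add: finite_borel_measure.cdf_lim_at_bot real_distribution.finite_borel_measure_M)

lemma Phi_lim_top: "(Phi \<longlongrightarrow> 1) at_top"
  unfolding Phi_cdf using N_rd by (simp add: real_distribution.cdf_lim_at_top_prob)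

lemma Phi_surj: assumes "0 < w" "w < 1" shows "\<exists>x. Phi x = w"
proof -
  from order_tendstoD(2)[OF Phi_lim_bot assms(1)] obtain a where a: "Phi a < w"
    by (auto simp: eventually_at_bot_linorder)
  from order_tendstoD(1)[OF Phi_lim_top assms(2)] obtain b where b: "Phi b > w"
    by (auto simp: eventually_at_top_linorder)
  have "a \<le> b"
  proof (rule ccontr)
    assume "\<not> a \<le> b" hence "Phi b \<le> Phi a" using Phi_mono by simp
    with a b show False by simp
  qed
  moreover have "\<forall>x. a \<le> x \<and> x \<le> b \<longrightarrow> isCont Phi x" using Phi_cont by blast
  ultimately show ?thesis using IVT[of Phi a w b] a b by auto
qed

definition Phiinv :: "real \<Rightarrow> real" where
  "Phiinv w = (if 0 < w \<and> w < 1 then (THE x. Phi x = w) else 0)"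

lemma Phi_Phiinv: "0 < w \<Longrightarrow> w < 1 \<Longrightarrow> Phi (Phiinv w) = w"
proof -
  assume w: "0 < w" "w < 1"
  obtain x where x: "Phi x = w" using Phi_surj[OF w] by blast
  have "(THE x. Phi x = w) = x"
  proof (rule the_equality)
    show "Phi x = w" by (rule x)
    fix y assume "Phi y = w"
    hence "Phi y \<le> Phi x" "Phi x \<le> Phi y" using x by auto
    thus "y = x" using Phi_le_iff by (meson order.antisym)
  qed
  thus ?thesis using x w by (simp add: Phiinv_def)
qed

lemma Phiinv_le_iff: "0 < w \<Longrightarrow> w < 1 \<Longrightarrow> Phiinv w \<le> s \<longleftrightarrow> w \<le> Phi s"
proof -
  assume w: "0 < w" "w < 1"
  have "Phiinv w \<le> s \<longleftrightarrow> Phi (Phiinv w) \<le> Phi s" by (simp add: Phi_le_iff)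
  thus ?thesis using Phi_Phiinv[OF w] by simp
qed

lemma Phiinv_gt_iff: "0 < w \<Longrightarrow> w < 1 \<Longrightarrow> t < Phiinv w \<longleftrightarrow> Phi t < w"
  by (simp add: not_le[symmetric] Phiinv_le_iff)

lemma Phiinv_measurable[measurable]: "Phiinv \<in> borel_measurable borel"
proof (subst borel_measurable_iff_le, intro allI)
  fix s
  have "{w \<in> space borel. Phiinv w \<le> s} = {w. 0 < w \<and> w < 1 \<and> w \<le> Phi s} \<union> {w. \<not>(0 < w \<and> w < 1) \<and> 0 \<le> s}"
    using Phiinv_le_iff by (auto simp: Phiinv_def)
  also have "\<dots> \<in> sets borel" by measurable
  finally show "{w \<in> space borel. Phiinv w \<le> s} \<in> sets borel" .
qed

end

definition U :: "real measure" where "U = density lborel (indicator {0..1})"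

lemma U_sets[simp, measurable_cong]: "sets U = sets borel" by (simp add: U_def)
lemma U_space[simp]: "space U = UNIV" by (simp add: U_def)

lemma emeasure_U: "A \<in> sets borel \<Longrightarrow> emeasure U A = emeasure lborel (A \<inter> {0..1})"
  unfolding U_def
  by (subst emeasure_density) (auto simp: indicator_inter_arith[symmetric] mult.commute intro!: nn_integral_indicator)

lemma U_prob: "prob_space U"
  by (rule prob_spaceI) (simp add: emeasure_U)

definition clamp01 :: "real \<Rightarrow> real" where "clamp01 u = max 0 (min 1 u)"

lemma clamp01_bounds: "0 \<le> clamp01 u" "clamp01 u \<le> 1" by (auto simp: clamp01_def)
lemma clamp01_id: "0 \<le> u \<Longrightarrow> u \<le> 1 \<Longrightarrow> clamp01 u = u" by (auto simp: clamp01_def)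
lemma clamp01_measurable[measurable]: "clamp01 \<in> borel_measurable borel" unfolding clamp01_def by measurable

locale pdist =
  fixes p :: "real measure"
  assumes p_rd: "real_distr p"
begin

lemma p_prob: "prob_space p" using p_rd by (simp add: real_distr_def)
lemma p_sets[simp, measurable_cong]: "sets p = sets borel" using p_rd by (simp add: real_distr_def)
lemma p_space[simp]: "space p = UNIV" using sets_eq_imp_space_eq[OF p_sets] by simp

lemma p_real_distribution: "real_distribution p"
  unfolding real_distribution_def real_distribution_axioms_def using p_prob by simp

definition F :: "real \<Rightarrow> real" where "F y = measure p {..y}"
definition Fm :: "real \<Rightarrow> real" where "Fm y = measure p {..<y}"

lemma F_mono: "x \<le> y \<Longrightarrow> F x \<le> F y"
proof -
  interpret prob_space p by (rule p_prob)
  show "x \<le> y \<Longrightarrow> F x \<le> F y" unfolding F_def by (intro finite_measure_mono) auto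
qed

lemma Fm_mono: "x \<le> y \<Longrightarrow> Fm x \<le> Fm y"
proof -
  interpret prob_space p by (rule p_prob)
  show "x \<le> y \<Longrightarrow> Fm x \<le> Fm y" unfolding Fm_def by (intro finite_measure_mono) auto
qed

lemma Fm_le_F: "Fm y \<le> F y"
proof -
  interpret prob_space p by (rule p_prob)
  show ?thesis unfolding F_def Fm_def by (intro finite_measure_mono) auto
qed

lemma F_le_Fm: "x < y \<Longrightarrow> F x \<le> Fm y"
proof -
  interpret prob_space p by (rule p_prob)
  show "x < y \<Longrightarrow> F x \<le> Fm y" unfolding F_def Fm_def by (intro finite_measure_mono) auto
qed

lemma F_atom: "F y - Fm y = measure p {y}"
proof -
  interpret prob_space p by (rule p_prob)
  have "{..y} = {..<y} \<union> {y}" by auto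
  moreover have "prob ({..<y} \<union> {y}) = prob {..<y} + prob {y}"
    by (rule finite_measure_Union) auto
  ultimately have "F y = Fm y + measure p {y}" unfolding F_def Fm_def by simp
  thus ?thesis by simp
qed

lemma Fm_nonneg: "0 \<le> Fm y" by (simp add: Fm_def)
lemma F_le1: "F y \<le> 1"
proof -
  interpret prob_space p by (rule p_prob)
  show ?thesis by (simp add: F_def)
qed

lemma F_measurable[measurable]: "F \<in> borel_measurable borel"
  by (rule borel_measurable_mono) (auto simp: mono_def F_mono)
lemma Fm_measurable[measurable]: "Fm \<in> borel_measurable borel"
  by (rule borel_measurable_mono) (auto simp: mono_def Fm_mono)

definition W :: "real \<times> real \<Rightarrow> real" where
  "W z = Fm (fst z) + clamp01 (snd z) * (F (fst z) - Fm (fst z))"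

lemma W_measurable[measurable]: "W \<in> borel_measurable (borel \<Otimes>\<^sub>M borel)"
  unfolding W_def by measurable

lemma W_ge: "Fm y \<le> W (y,u)"
  unfolding W_def using clamp01_bounds[of u] Fm_le_F[of y] by simp

lemma W_le: "W (y,u) \<le> F y"
proof -
  have "clamp01 u * (F y - Fm y) \<le> 1 * (F y - Fm y)"
    using clamp01_bounds[of u] Fm_le_F[of y] by (intro mult_right_mono) auto
  thus ?thesis unfolding W_def by simp
qed

lemma W_01': "0 \<le> W z \<and> W z \<le> 1"
proof (cases z)
  case (Pair y u)
  thus ?thesis using W_ge[of y u] W_le[of y u] Fm_nonneg[of y] F_le1[of y] by auto
qed

lemma W_01: "0 \<le> W z" "W z \<le> 1" using W_01' by auto

abbreviation "M0 \<equiv> p \<Otimes>\<^sub>M U"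

lemma M0_prob: "prob_space M0"
  using p_prob U_prob by (simp add: prob_space_pair pair_prob_space.intro)

lemma M0_sets[measurable_cong]: "sets M0 = sets (borel \<Otimes>\<^sub>M borel)"
  by (intro sets_pair_measure_cong) auto

lemma M0_space[simp]: "space M0 = UNIV"
  by (simp add: space_pair_measure)

lemma F_lim_top: "(F \<longlongrightarrow> 1) at_top"
proof -
  have "F = cdf p" by (simp add: F_def[abs_def] cdf_def)
  thus ?thesis using p_real_distribution by (simp add: real_distribution.cdf_lim_at_top_prob)
qed

lemma F_lim_bot: "(F \<longlongrightarrow> 0) at_bot"
proof -
  have "F = cdf p" by (simp add: F_def[abs_def] cdf_def)
  thus ?thesis using p_real_distribution
    by (simp add: finite_borel_measure.cdf_lim_at_bot real_distribution.finite_borel_measure_M)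
qed

lemma F_right_cont: "continuous (at_right a) F"
proof -
  have "F = cdf p" by (simp add: F_def[abs_def] cdf_def)
  thus ?thesis using p_real_distribution
    by (simp add: finite_borel_measure.cdf_is_right_cont real_distribution.finite_borel_measure_M)
qed

lemma Fm_left_lim: "(F \<longlongrightarrow> Fm a) (at_left a)"
proof -
  have "F = cdf p" by (simp add: F_def[abs_def] cdf_def)
  thus ?thesis using p_real_distribution unfolding Fm_def
    by (simp add: finite_borel_measure.cdf_at_left real_distribution.finite_borel_measure_M)
qed

lemma quantile_exists:
  assumes t: "0 < t" "t < 1"
  shows "\<exists>y0. t \<le> F y0 \<and> Fm y0 \<le> t \<and> (\<forall>y<y0. F y < t)"
proof -
  define S where "S = {y. t \<le> F y}"
  from order_tendstoD(1)[OF F_lim_top t(2)] obtain b where b: "\<And>y. y \<ge> b \<Longrightarrow> F y > t"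
    by (auto simp: eventually_at_top_linorder)
  from order_tendstoD(2)[OF F_lim_bot t(1)] obtain a where a: "\<And>y. y \<le> a \<Longrightarrow> F y < t"
    by (auto simp: eventually_at_bot_linorder)
  have "b \<in> S" using b[of b] by (simp add: S_def)
  hence Sne: "S \<noteq> {}" by auto
  have Sbdd: "bdd_below S" unfolding bdd_below_def S_def
    using a by (metis linorder_not_le mem_Collect_eq not_less_iff_gr_or_eq)
  define y0 where "y0 = Inf S"
  have below: "\<And>y. y < y0 \<Longrightarrow> F y < t"
  proof -
    fix y assume "y < y0"
    hence "y \<notin> S" using cInf_lower[OF _ Sbdd] y0_def by force
    thus "F y < t" by (simp add: S_def)
  qed
  have above: "\<And>y. y > y0 \<Longrightarrow> t \<le> F y"
  proof -
    fix y assume "y > y0"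
    then obtain s where "s \<in> S" "s < y" using cInf_less_iff[OF Sne Sbdd] y0_def by auto
    thus "t \<le> F y" using F_mono[of s y] by (auto simp: S_def)
  qed
  have "t \<le> F y0"
  proof -
    have "(F \<longlongrightarrow> F y0) (at_right y0)" using F_right_cont by (simp add: continuous_within)
    moreover have "eventually (\<lambda>y. t \<le> F y) (at_right y0)"
      using above by (auto simp: eventually_at_right_field intro!: exI[of _ "y0 + 1"])
    ultimately show ?thesis by (intro tendsto_lowerbound) auto
  qed
  moreover have "Fm y0 \<le> t"
  proof -
    have "eventually (\<lambda>y. F y \<le> t) (at_left y0)"
      using below by (auto simp: eventually_at_left_field less_imp_le intro!: exI[of _ "y0 - 1"])
    thus ?thesis by (intro tendsto_upperbound[OF Fm_left_lim]) auto
  qed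
  ultimately show ?thesis using below by blast
qed

end

context pdist begin

lemma W_lt:
  assumes t: "0 < t" "t < 1"
  shows "emeasure M0 {z. W z < t} = ennreal t"
proof -
  obtain y0 where y0: "t \<le> F y0" "Fm y0 \<le> t" "\<And>y. y < y0 \<Longrightarrow> F y < t"
    using quantile_exists[OF t] by blast
  define \<Delta> where "\<Delta> = F y0 - Fm y0"
  define c where "c = (if \<Delta> > 0 then (t - Fm y0)/\<Delta> else 0)"
  have \<Delta>nn: "\<Delta> \<ge> 0" using Fm_le_F[of y0] by (simp add: \<Delta>_def)
  have c0: "0 \<le> c" using y0 \<Delta>nn by (simp add: c_def)
  have c1: "c \<le> 1" using y0 \<Delta>nn by (simp add: c_def \<Delta>_def field_simps)
  have c\<Delta>: "c * \<Delta> = t - Fm y0"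
    using y0 \<Delta>nn by (cases "\<Delta> > 0") (auto simp: c_def \<Delta>_def)
  interpret U: prob_space U by (rule U_prob)
  have meas: "{z. W z < t} \<in> sets (p \<Otimes>\<^sub>M U)"
  proof -
    have "{z \<in> space (p \<Otimes>\<^sub>M U). W z < t} \<in> sets (p \<Otimes>\<^sub>M U)" by measurable
    thus ?thesis by (simp add: space_pair_measure)
  qed
  have "emeasure M0 {z. W z < t} = (\<integral>\<^sup>+y. emeasure U (Pair y -` {z. W z < t}) \<partial>p)"
    by (rule U.emeasure_pair_measure_alt[OF meas])
  also have "\<dots> = (\<integral>\<^sup>+y. (indicator {..<y0} y + ennreal c * indicator {y0} y) \<partial>p)"
  proof (rule nn_integral_cong)
    fix y
    show "emeasure U (Pair y -` {z. W z < t}) = indicator {..<y0} y + ennreal c * indicator {y0} y"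
    proof (cases rule: linorder_cases[of y y0])
      case less
      have "\<And>u. W (y,u) < t" using W_le[of y] y0(3)[OF less] by (meson le_less_trans)
      hence "Pair y -` {z. W z < t} = UNIV" by auto
      then show ?thesis using less U.emeasure_space_1 by simp
    next
      case greater
      have "F y0 \<le> Fm y" using F_le_Fm[OF greater] .
      then have "\<And>u. t \<le> W (y,u)" using W_ge[of y] y0(1) by (meson order_trans)
      then have "Pair y -` {z. W z < t} = {}" by (auto simp: not_less[symmetric])
      then show ?thesis using greater by simp
    next
      case equal
      show ?thesis
      proof (cases "\<Delta> > 0")
        case True
        have "Pair y -` {z. W z < t} \<inter> {0..1} = {0..<c}"
        proof (intro set_eqI iffI)
          fix u assume u: "u \<in> Pair y -` {z. W z < t} \<inter> {0..1}"
          hence "Fm y0 + u * \<Delta> < t" using equal by (auto simp: W_def clamp01_id \<Delta>_def)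
          hence "u * \<Delta> < t - Fm y0" by simp
          hence "u < c" using True by (simp add: c_def field_simps)
          thus "u \<in> {0..<c}" using u by auto
        next
          fix u assume u: "u \<in> {0..<c}"
          hence u1: "u \<le> 1" using c1 by simp
          have "u * \<Delta> < c * \<Delta>" using u True by (intro mult_strict_right_mono) auto
          hence "Fm y0 + u * \<Delta> < t" using c\<Delta> by simp
          thus "u \<in> Pair y -` {z. W z < t} \<inter> {0..1}"
            using u u1 equal by (simp add: W_def clamp01_id \<Delta>_def)
        qed
        moreover have "Pair y -` {z. W z < t} \<in> sets borel"
          using meas by (metis U_sets measurable_Pair2' p_space sets_Pair1 UNIV_I)
        ultimately have "emeasure U (Pair y -` {z. W z < t}) = emeasure lborel {0..<c}"
          by (simp add: emeasure_U)
        also have "\<dots> = ennreal c" using c0 by simp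
        finally show ?thesis using equal by simp
      next
        case False
        hence "\<Delta> = 0" using \<Delta>nn by simp
        hence "\<And>u. W (y, u) = F y0" using equal by (simp add: W_def \<Delta>_def)
        hence "Pair y -` {z. W z < t} = {}" using y0(1) by (auto simp: not_less[symmetric])
        moreover have "c = 0" using False by (simp add: c_def)
        ultimately show ?thesis using equal by simp
      qed
    qed
  qed
  also have "\<dots> = emeasure p {..<y0} + ennreal c * emeasure p {y0}"
    by (subst nn_integral_add) (auto simp: nn_integral_cmult_indicator)
  also have "\<dots> = ennreal (Fm y0 + c * \<Delta>)"
  proof -
    interpret prob_space p by (rule p_prob)
    show ?thesis using F_atom[of y0] c0 \<Delta>nn
      by (simp add: emeasure_eq_measure Fm_def \<Delta>_def ennreal_mult ennreal_plus[symmetric])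
  qed
  also have "\<dots> = ennreal t" using c\<Delta> by simp
  finally show ?thesis .
qed

end

context pdist begin

sublocale M0: prob_space "p \<Otimes>\<^sub>M U" by (rule M0_prob)

lemma W_set_meas[measurable]: "{z. P (W z)} \<in> sets M0" if [measurable]: "Measurable.pred borel P"
proof -
  have "{z \<in> space M0. P (W z)} \<in> sets M0" by measurable
  thus ?thesis by simp
qed

lemma W_sets_basic[simp]:
  "{z. W z < a} \<in> sets (borel \<Otimes>\<^sub>M borel)"
  "{z. W z = a} \<in> sets (borel \<Otimes>\<^sub>M borel)"
  "{z. W z \<le> a} \<in> sets (borel \<Otimes>\<^sub>M borel)"
  "{z. a \<le> W z} \<in> sets (borel \<Otimes>\<^sub>M borel)"
  "{z. a \<le> W z \<and> W z \<le> b} \<in> sets (borel \<Otimes>\<^sub>M borel)"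
  "{z. a < W z \<and> W z \<le> b} \<in> sets (borel \<Otimes>\<^sub>M borel)"
  "{z. \<not> (0 < W z \<and> W z < 1)} \<in> sets (borel \<Otimes>\<^sub>M borel)"
  "UNIV - {z. W z < a} \<in> sets (borel \<Otimes>\<^sub>M borel)"
  "UNIV - {z. a \<le> W z} \<in> sets (borel \<Otimes>\<^sub>M borel)"
  using sets.compl_sets[OF W_set_meas[of "\<lambda>w. w < a"]] sets.compl_sets[OF W_set_meas[of "\<lambda>w. a \<le> w"]]
     W_set_meas[of "\<lambda>w. w < a"] W_set_meas[of "\<lambda>w. w = a"] W_set_meas[of "\<lambda>w. w \<le> a"]
    W_set_meas[of "\<lambda>w. a \<le> w"] W_set_meas[of "\<lambda>w. a \<le> w \<and> w \<le> b"]
    W_set_meas[of "\<lambda>w. a < w \<and> w \<le> b"] W_set_meas[of "\<lambda>w. \<not> (0 < w \<and> w < 1)"]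
  by (auto simp: M0_sets)

lemma PW_lt01: "0 < t \<Longrightarrow> t < 1 \<Longrightarrow> M0.prob {z. W z < t} = t"
  using W_lt by (simp add: M0.emeasure_eq_measure)

lemma PW_ge1: "M0.prob {z. 1 \<le> W z} = 0"
proof -
  have "M0.prob {z. 1 \<le> W z} \<le> 0 + e" if e: "e > 0" for e
  proof -
    define t where "t = 1 - min e (1/2)"
    have t: "0 < t" "t < 1" using e by (auto simp: t_def)
    have "{z. 1 \<le> W z} \<subseteq> space M0 - {z. W z < t}" using t by auto
    hence "M0.prob {z. 1 \<le> W z} \<le> M0.prob (space M0 - {z. W z < t})"
      by (intro M0.finite_measure_mono) auto
    also have "\<dots> = 1 - t" using PW_lt01[OF t] by (subst M0.prob_compl) auto
    finally show ?thesis by (simp add: t_def)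
  qed
  hence "M0.prob {z. 1 \<le> W z} \<le> 0" by (rule field_le_epsilon)
  thus ?thesis by (simp add: order.antisym)
qed

lemma PW_lt: "M0.prob {z. W z < a} = clamp01 a"
proof -
  consider "a \<le> 0" | "0 < a \<and> a < 1" | "1 \<le> a" by linarith
  thus ?thesis
  proof cases
    case 1
    have "\<And>z. \<not> W z < a" proof - fix z show "\<not> W z < a" using W_01(1)[of z] 1 by linarith qed
    hence "M0.prob {z. W z < a} = 0" by simp
    thus ?thesis using 1 by (simp add: clamp01_def)
  next
    case 2 thus ?thesis using PW_lt01 by (simp add: clamp01_def)
  next
    case 3
    have "{z. W z < a} \<supseteq> space M0 - {z. 1 \<le> W z}" using 3 by auto
    hence "M0.prob {z. W z < a} \<ge> M0.prob (space M0 - {z. 1 \<le> W z})"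
      by (intro M0.finite_measure_mono) auto
    also have "M0.prob (space M0 - {z. 1 \<le> W z}) = 1" using PW_ge1 by (subst M0.prob_compl) auto
    finally have "M0.prob {z. W z < a} \<ge> 1" .
    moreover have "M0.prob {z. W z < a} \<le> 1" by simp
    ultimately show ?thesis using 3 by (simp add: clamp01_def)
  qed
qed

lemma PW_eq: "M0.prob {z. W z = a} = 0"
proof -
  have "M0.prob {z. W z = a} \<le> 0 + e" if e: "e > 0" for e
  proof -
    consider "a < 0 \<or> 1 < a" | "0 \<le> a \<and> a < 1" | "a = 1" by linarith
    thus ?thesis
    proof cases
      case 1
      have "\<And>z. W z \<noteq> a" proof - fix z show "W z \<noteq> a" using W_01[of z] 1 by linarith qed
      hence "M0.prob {z. W z = a} = 0" by simp
      thus ?thesis using e by simp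
    next
      case 2
      define m where "m = min e ((1 - a)/2)"
      define t where "t = a + m"
      have m1: "m \<le> (1-a)/2" unfolding m_def by (rule min.cobounded2)
      have m2: "m > 0" using e 2 by (auto simp: m_def)
      have m3: "m \<le> e" unfolding m_def by (rule min.cobounded1)
      have t1: "a < t" using m2 unfolding t_def by linarith
      have t2: "t < 1" using m1 2 unfolding t_def by (auto simp: field_simps)
      have t3: "t - a \<le> e" using m3 unfolding t_def by linarith
      note t = t1 t2 t3
      have "{z. W z = a} \<subseteq> {z. W z < t} - {z. W z < a}" using t by auto
      hence "M0.prob {z. W z = a} \<le> M0.prob ({z. W z < t} - {z. W z < a})"
        by (intro M0.finite_measure_mono) auto
      also have "\<dots> = M0.prob {z. W z < t} - M0.prob {z. W z < a}"
        by (subst M0.finite_measure_Diff) (use t1 in auto)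
      also have "\<dots> = t - a" using t 2 by (simp add: PW_lt clamp01_def)
      finally show ?thesis using t by simp
    next
      case 3
      have "{z. W z = a} \<subseteq> {z. 1 \<le> W z}" using 3 by auto
      hence "M0.prob {z. W z = a} \<le> M0.prob {z. 1 \<le> W z}"
        by (intro M0.finite_measure_mono) auto
      thus ?thesis using PW_ge1 e by simp
    qed
  qed
  hence "M0.prob {z. W z = a} \<le> 0" by (rule field_le_epsilon)
  thus ?thesis by (simp add: order.antisym)
qed

lemma PW_le: "M0.prob {z. W z \<le> b} = clamp01 b"
proof -
  have "{z. W z \<le> b} = {z. W z < b} \<union> {z. W z = b}" by auto
  moreover have "M0.prob ({z. W z < b} \<union> {z. W z = b}) = M0.prob {z. W z < b} + M0.prob {z. W z = b}"
    by (rule M0.finite_measure_Union) auto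
  ultimately show ?thesis using PW_lt PW_eq by simp
qed

lemma clamp01_lip: "a \<le> b \<Longrightarrow> clamp01 b - clamp01 a \<le> b - a"
  by (auto simp: clamp01_def)

lemma PW_Icc: "M0.prob {z. a \<le> W z \<and> W z \<le> b} \<le> max 0 (b - a)"
proof (cases "a \<le> b")
  case True
  have "{z. a \<le> W z \<and> W z \<le> b} = {z. W z \<le> b} - {z. W z < a}" by auto
  moreover have "M0.prob ({z. W z \<le> b} - {z. W z < a}) = M0.prob {z. W z \<le> b} - M0.prob {z. W z < a}"
    using True by (intro M0.finite_measure_Diff) auto
  ultimately have "M0.prob {z. a \<le> W z \<and> W z \<le> b} = M0.prob {z. W z \<le> b} - M0.prob {z. W z < a}"
    by simp
  also have "\<dots> \<le> b - a" using True by (simp add: PW_le PW_lt clamp01_lip)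
  finally show ?thesis by simp
next
  case False
  hence e: "{z. a \<le> W z \<and> W z \<le> b} = {}" by auto
  show ?thesis by (simp only: e) simp
qed

lemma PW_Ioc: "M0.prob {z. a < W z \<and> W z \<le> b} \<le> max 0 (b - a)"
proof -
  have "M0.prob {z. a < W z \<and> W z \<le> b} \<le> M0.prob {z. a \<le> W z \<and> W z \<le> b}"
    by (intro M0.finite_measure_mono) auto
  thus ?thesis using PW_Icc[of a b] by simp
qed

lemma PW_01: "M0.prob {z. \<not> (0 < W z \<and> W z < 1)} = 0"
proof -
  have "{z. \<not> (0 < W z \<and> W z < 1)} \<subseteq> {z. W z = 0} \<union> {z. W z = 1}"
  proof
    fix z assume "z \<in> {z. \<not> (0 < W z \<and> W z < 1)}"
    thus "z \<in> {z. W z = 0} \<union> {z. W z = 1}" using W_01[of z] by auto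
  qed
  hence "M0.prob {z. \<not> (0 < W z \<and> W z < 1)} \<le> M0.prob ({z. W z = 0} \<union> {z. W z = 1})"
    by (intro M0.finite_measure_mono) auto
  also have "\<dots> \<le> M0.prob {z. W z = 0} + M0.prob {z. W z = 1}"
    by (rule measure_Un_le) auto
  finally show ?thesis using PW_eq by (simp add: order.antisym)
qed

end

locale lsetup = gauss \<mu> \<sigma> + pdist p for \<mu> \<sigma> p
begin

definition Xs :: "real \<times> real \<Rightarrow> real" where "Xs z = Phiinv (W z)"

lemma Xs_measurable[measurable]: "Xs \<in> borel_measurable (borel \<Otimes>\<^sub>M borel)"
  unfolding Xs_def by measurable

lemma Xs_measurable_M0[measurable]: "Xs \<in> borel_measurable M0"
  using Xs_measurable by (simp add: measurable_cong_sets[OF M0_sets refl])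

lemma fst_measurable_M0[measurable]: "fst \<in> borel_measurable M0"
  by (simp add: measurable_cong_sets[OF M0_sets refl])

lemma M0_set: "Measurable.pred M0 P \<Longrightarrow> {z. P z} \<in> sets M0"
proof -
  assume [measurable]: "Measurable.pred M0 P"
  have "{z \<in> space M0. P z} \<in> sets M0" by measurable
  thus ?thesis by simp
qed

lemma AE_W01: "AE z in M0. 0 < W z \<and> W z < 1"
proof -
  have S: "{z \<in> space M0. \<not> (0 < W z \<and> W z < 1)} \<in> sets M0" by measurable
  have "{z \<in> space M0. \<not> (0 < W z \<and> W z < 1)} = {z. \<not> (0 < W z \<and> W z < 1)}" by simp
  moreover have "M0.prob {z. \<not> (0 < W z \<and> W z < 1)} = 0" by (rule PW_01)
  ultimately have "emeasure M0 {z \<in> space M0. \<not> (0 < W z \<and> W z < 1)} = 0"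
    by (simp add: M0.emeasure_eq_measure)
  thus ?thesis by (subst AE_iff_measurable[OF S refl])
qed

lemma distr_Xs: "distr M0 borel Xs = N"
proof (rule cdf_unique)
  show "real_distribution (distr M0 borel Xs)" by (rule M0.real_distribution_distr) simp
  show "real_distribution N" by (rule N_rd)
  show "cdf (distr M0 borel Xs) = cdf N"
  proof
    fix s
    have "cdf (distr M0 borel Xs) s = M0.prob {z. Xs z \<le> s}"
      by (simp add: cdf_def measure_distr vimage_def)
    also have "\<dots> = M0.prob {z. W z \<le> Phi s}"
    proof (rule M0.finite_measure_eq_AE)
      show "AE x in M0. (x \<in> {z. Xs z \<le> s}) = (x \<in> {z. W z \<le> Phi s})"
        using AE_W01 by eventually_elim (simp add: Xs_def Phiinv_le_iff)
    qed (rule M0_set, measurable)+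
    also have "\<dots> = Phi s" using Phi_pos[of s] Phi_less_1[of s] by (simp add: PW_le clamp01_def)
    finally show "cdf (distr M0 borel Xs) s = cdf N s" by (simp add: Phi_cdf)
  qed
qed

lemma prob_diff_lower:
  assumes "prob_space M" "A \<in> sets M" "B \<in> sets M"
  shows "measure M A - measure M B \<le> measure M (A - B)"
proof -
  interpret prob_space M by fact
  have "measure M A \<le> measure M ((A - B) \<union> B)" using assms by (intro finite_measure_mono) auto
  also have "\<dots> \<le> measure M (A - B) + measure M B" using assms by (intro measure_Un_le) auto
  finally show ?thesis by simp
qed

lemma coupling_props:
  assumes "\<gamma> \<in> couplings N p"
  shows "prob_space \<gamma>" "sets \<gamma> = sets (borel \<Otimes>\<^sub>M borel)" "space \<gamma> = UNIV"
    "measure \<gamma> {x. fst x \<le> s} = Phi s" "measure \<gamma> {x. snd x \<le> s} = F s"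
proof -
  show pg: "prob_space \<gamma>" and sg: "sets \<gamma> = sets (borel \<Otimes>\<^sub>M borel)"
    using assms by (auto simp: couplings_def joint_distr_def)
  show sp: "space \<gamma> = UNIV" using sets_eq_imp_space_eq[OF sg] by (simp add: space_pair_measure)
  have mf: "fst \<in> measurable \<gamma> borel" "snd \<in> measurable \<gamma> borel"
    using sg by (auto simp: measurable_cong_sets[OF sg refl])
  have "Phi s = measure (distr \<gamma> borel fst) {..s}" using assms by (simp add: couplings_def Phi_def)
  also have "\<dots> = measure \<gamma> {x. fst x \<le> s}" using mf sp by (simp add: measure_distr vimage_def)
  finally show "measure \<gamma> {x. fst x \<le> s} = Phi s" ..
  have "F s = measure (distr \<gamma> borel snd) {..s}" using assms by (simp add: couplings_def F_def)
  also have "\<dots> = measure \<gamma> {x. snd x \<le> s}" using mf sp by (simp add: measure_distr vimage_def)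
  finally show "measure \<gamma> {x. snd x \<le> s} = F s" ..
qed

lemma coupling_set: "\<gamma> \<in> couplings N p \<Longrightarrow> Measurable.pred (borel \<Otimes>\<^sub>M borel) P \<Longrightarrow> {x. P x} \<in> sets \<gamma>"
proof -
  assume g: "\<gamma> \<in> couplings N p" and [measurable]: "Measurable.pred (borel \<Otimes>\<^sub>M borel) P"
  have "{x \<in> space (borel \<Otimes>\<^sub>M borel). P x} \<in> sets (borel \<Otimes>\<^sub>M borel)" by measurable
  thus ?thesis using coupling_props[OF g] by (simp add: space_pair_measure)
qed

lemma frechet1:
  assumes g: "\<gamma> \<in> couplings N p"
  shows "M0.prob {z. Xs z \<le> s \<and> t < fst z} \<le> measure \<gamma> {x. fst x \<le> s \<and> t < snd x}"
proof -
  have "M0.prob {z. Xs z \<le> s \<and> t < fst z} \<le> M0.prob {z. F t \<le> W z \<and> W z \<le> Phi s}"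
  proof (rule M0.finite_measure_mono_AE)
    show "AE z in M0. z \<in> {z. Xs z \<le> s \<and> t < fst z} \<longrightarrow> z \<in> {z. F t \<le> W z \<and> W z \<le> Phi s}"
      using AE_W01
    proof eventually_elim
      case (elim z)
      show ?case
      proof
        assume z: "z \<in> {z. Xs z \<le> s \<and> t < fst z}"
        hence "W z \<le> Phi s" using elim by (simp add: Xs_def Phiinv_le_iff)
        moreover have "F t \<le> W z"
          using F_le_Fm[of t "fst z"] z W_ge[of "fst z" "snd z"] by simp
        ultimately show "z \<in> {z. F t \<le> W z \<and> W z \<le> Phi s}" by simp
      qed
    qed
  qed (rule M0_set, measurable)+
  also have "\<dots> \<le> max 0 (Phi s - F t)" by (rule PW_Icc)
  also have "\<dots> \<le> measure \<gamma> {x. fst x \<le> s \<and> t < snd x}"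
  proof -
    have "{x. fst x \<le> s} - {x. snd x \<le> t} = {x. fst x \<le> s \<and> t < snd x}" by auto
    hence "Phi s - F t \<le> measure \<gamma> {x. fst x \<le> s \<and> t < snd x}"
      using prob_diff_lower[OF coupling_props(1)[OF g] coupling_set[OF g] coupling_set[OF g], of "\<lambda>x. fst x \<le> s" "\<lambda>x. snd x \<le> t"]
        coupling_props(4,5)[OF g] by simp
    thus ?thesis by simp
  qed
  finally show ?thesis .
qed

lemma frechet2:
  assumes g: "\<gamma> \<in> couplings N p"
  shows "M0.prob {z. fst z \<le> s \<and> t < Xs z} \<le> measure \<gamma> {x. snd x \<le> s \<and> t < fst x}"
proof -
  have "M0.prob {z. fst z \<le> s \<and> t < Xs z} \<le> M0.prob {z. Phi t < W z \<and> W z \<le> F s}"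
  proof (rule M0.finite_measure_mono_AE)
    show "AE z in M0. z \<in> {z. fst z \<le> s \<and> t < Xs z} \<longrightarrow> z \<in> {z. Phi t < W z \<and> W z \<le> F s}"
      using AE_W01
    proof eventually_elim
      case (elim z)
      show ?case
      proof
        assume z: "z \<in> {z. fst z \<le> s \<and> t < Xs z}"
        hence "Phi t < W z" using elim by (simp add: Xs_def Phiinv_gt_iff)
        moreover have "W z \<le> F s"
          using F_mono[of "fst z" s] z W_le[of "fst z" "snd z"] by simp
        ultimately show "z \<in> {z. Phi t < W z \<and> W z \<le> F s}" by simp
      qed
    qed
  qed (rule M0_set, measurable)+
  also have "\<dots> \<le> max 0 (F s - Phi t)" by (rule PW_Ioc)
  also have "\<dots> \<le> measure \<gamma> {x. snd x \<le> s \<and> t < fst x}"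
  proof -
    have "{x. snd x \<le> s} - {x. fst x \<le> t} = {x. snd x \<le> s \<and> t < fst x}" by auto
    hence "F s - Phi t \<le> measure \<gamma> {x. snd x \<le> s \<and> t < fst x}"
      using prob_diff_lower[OF coupling_props(1)[OF g] coupling_set[OF g] coupling_set[OF g], of "\<lambda>x. snd x \<le> s" "\<lambda>x. fst x \<le> t"]
        coupling_props(4,5)[OF g] by simp
    thus ?thesis by simp
  qed
  finally show ?thesis .
qed

end

definition Kf :: "real \<Rightarrow> real \<Rightarrow> real \<Rightarrow> real \<Rightarrow> ennreal" where
  "Kf a b s t = indicator ({a..<b} \<union> {b..<a}) s * indicator ({a..<b} \<union> {b..<a}) t"

lemma Kf_alt: "Kf a b s t = (if a \<le> min s t \<and> max s t < b then 1 else 0) + (if b \<le> min s t \<and> max s t < a then 1 else 0)"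
  unfolding Kf_def by (auto split: split_indicator split_min split_max)

lemma Kf_measurable[measurable]:
  "(\<lambda>x. Kf (f x) (g x) (h x) (k x)) \<in> borel_measurable M"
  if [measurable]: "f \<in> borel_measurable M" "g \<in> borel_measurable M" "h \<in> borel_measurable M" "k \<in> borel_measurable M"
  unfolding Kf_alt by measurable

lemma emeasure_lborel_two: "emeasure lborel ({a..<b} \<union> {b..<a}) = ennreal \<bar>b - a\<bar>"
proof (cases "a \<le> b")
  case True
  hence e: "{a..<b} \<union> {b..<a} = {a..<b}" by auto
  show ?thesis unfolding e using True by simp
next
  case False
  hence e: "{a..<b} \<union> {b..<a} = {b..<a}" by auto
  show ?thesis unfolding e using False by simp
qed

lemma Kf_int: "(\<integral>\<^sup>+s. \<integral>\<^sup>+t. Kf a b s t \<partial>lborel \<partial>lborel) = ennreal ((a - b)\<^sup>2)"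
proof -
  define S where "S = {a..<b} \<union> {b..<a}"
  have Sm: "S \<in> sets lborel" by (simp add: S_def)
  have inner: "(\<integral>\<^sup>+t. Kf a b s t \<partial>lborel) = ennreal \<bar>b - a\<bar> * indicator S s" for s
  proof -
    have "(\<integral>\<^sup>+t. Kf a b s t \<partial>lborel) = (\<integral>\<^sup>+t. indicator S s * indicator S t \<partial>lborel)"
      by (simp add: Kf_def S_def)
    also have "\<dots> = indicator S s * emeasure lborel S"
      using Sm by (rule nn_integral_cmult_indicator)
    also have "\<dots> = ennreal \<bar>b - a\<bar> * indicator S s"
      by (simp add: S_def emeasure_lborel_two mult.commute)
    finally show ?thesis .
  qed
  have "(\<integral>\<^sup>+s. \<integral>\<^sup>+t. Kf a b s t \<partial>lborel \<partial>lborel) = (\<integral>\<^sup>+s. ennreal \<bar>b - a\<bar> * indicator S s \<partial>lborel)"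
    by (simp only: inner)
  also have "\<dots> = ennreal \<bar>b - a\<bar> * emeasure lborel S"
    using Sm by (rule nn_integral_cmult_indicator)
  also have "\<dots> = ennreal \<bar>b - a\<bar> * ennreal \<bar>b - a\<bar>"
    by (simp only: S_def emeasure_lborel_two)
  also have "\<dots> = ennreal (\<bar>b - a\<bar> * \<bar>b - a\<bar>)"
    by (rule ennreal_mult[symmetric]) auto
  also have "\<bar>b - a\<bar> * \<bar>b - a\<bar> = (a - b)\<^sup>2"
    by (simp add: abs_mult_self_eq power2_eq_square algebra_simps)
  finally show ?thesis .
qed

lemma sq_nn_integral:
  assumes sf: "sigma_finite_measure M" and [measurable]: "A \<in> borel_measurable M" "B \<in> borel_measurable M"
  shows "(\<integral>\<^sup>+\<omega>. ennreal ((A \<omega> - B \<omega>)\<^sup>2) \<partial>M) =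
    (\<integral>\<^sup>+s. \<integral>\<^sup>+t. emeasure M {\<omega>\<in>space M. A \<omega> \<le> min s t \<and> max s t < B \<omega>}
       + emeasure M {\<omega>\<in>space M. B \<omega> \<le> min s t \<and> max s t < A \<omega>} \<partial>lborel \<partial>lborel)"
proof -
  interpret M: sigma_finite_measure M by fact
  interpret P: pair_sigma_finite M lborel by unfold_locales
  interpret P2: pair_sigma_finite "M \<Otimes>\<^sub>M lborel" lborel by unfold_locales
  have mK: "(\<lambda>x. Kf (A (fst (fst x))) (B (fst (fst x))) (snd (fst x)) (snd x)) \<in> borel_measurable ((M \<Otimes>\<^sub>M lborel) \<Otimes>\<^sub>M lborel)"
    by (intro Kf_measurable) measurable
  have m1: "case_prod (\<lambda>\<omega> s. \<integral>\<^sup>+t. Kf (A \<omega>) (B \<omega>) s t \<partial>lborel) \<in> borel_measurable (M \<Otimes>\<^sub>M lborel)"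
  proof -
    have "(\<lambda>x. \<integral>\<^sup>+t. Kf (A (fst x)) (B (fst x)) (snd x) t \<partial>lborel) \<in> borel_measurable (M \<Otimes>\<^sub>M lborel)"
      using lborel.borel_measurable_nn_integral_fst[OF mK] by simp
    thus ?thesis by (simp add: case_prod_beta')
  qed
  have "(\<integral>\<^sup>+\<omega>. ennreal ((A \<omega> - B \<omega>)\<^sup>2) \<partial>M) = (\<integral>\<^sup>+\<omega>. \<integral>\<^sup>+s. \<integral>\<^sup>+t. Kf (A \<omega>) (B \<omega>) s t \<partial>lborel \<partial>lborel \<partial>M)"
    by (simp only: Kf_int)
  also have "\<dots> = (\<integral>\<^sup>+s. \<integral>\<^sup>+\<omega>. \<integral>\<^sup>+t. Kf (A \<omega>) (B \<omega>) s t \<partial>lborel \<partial>M \<partial>lborel)"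
    by (rule P.Fubini'[symmetric, OF m1])
  also have "\<dots> = (\<integral>\<^sup>+s. \<integral>\<^sup>+t. \<integral>\<^sup>+\<omega>. Kf (A \<omega>) (B \<omega>) s t \<partial>M \<partial>lborel \<partial>lborel)"
  proof (intro nn_integral_cong)
    fix s
    have "case_prod (\<lambda>\<omega> t. Kf (A \<omega>) (B \<omega>) s t) \<in> borel_measurable (M \<Otimes>\<^sub>M lborel)"
    proof -
      have "(\<lambda>x. Kf (A (fst x)) (B (fst x)) s (snd x)) \<in> borel_measurable (M \<Otimes>\<^sub>M lborel)"
        by (intro Kf_measurable) measurable
      thus ?thesis by (simp add: case_prod_beta')
    qed
    thus "(\<integral>\<^sup>+\<omega>. \<integral>\<^sup>+t. Kf (A \<omega>) (B \<omega>) s t \<partial>lborel \<partial>M) = (\<integral>\<^sup>+t. \<integral>\<^sup>+\<omega>. Kf (A \<omega>) (B \<omega>) s t \<partial>M \<partial>lborel)"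
      by (rule P.Fubini'[symmetric])
  qed
  also have "\<dots> = (\<integral>\<^sup>+s. \<integral>\<^sup>+t. emeasure M {\<omega>\<in>space M. A \<omega> \<le> min s t \<and> max s t < B \<omega>}
       + emeasure M {\<omega>\<in>space M. B \<omega> \<le> min s t \<and> max s t < A \<omega>} \<partial>lborel \<partial>lborel)"
  proof (intro nn_integral_cong)
    fix s t
    have S1: "{\<omega>\<in>space M. A \<omega> \<le> min s t \<and> max s t < B \<omega>} \<in> sets M" by measurable
    have S2: "{\<omega>\<in>space M. B \<omega> \<le> min s t \<and> max s t < A \<omega>} \<in> sets M" by measurable
    have "(\<integral>\<^sup>+\<omega>. Kf (A \<omega>) (B \<omega>) s t \<partial>M) = (\<integral>\<^sup>+\<omega>. indicator {\<omega>\<in>space M. A \<omega> \<le> min s t \<and> max s t < B \<omega>} \<omega>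
       + indicator {\<omega>\<in>space M. B \<omega> \<le> min s t \<and> max s t < A \<omega>} \<omega> \<partial>M)"
      by (intro nn_integral_cong) (simp add: Kf_alt indicator_def)
    also have "\<dots> = emeasure M {\<omega>\<in>space M. A \<omega> \<le> min s t \<and> max s t < B \<omega>}
       + emeasure M {\<omega>\<in>space M. B \<omega> \<le> min s t \<and> max s t < A \<omega>}"
      using S1 S2 by (simp add: nn_integral_add)
    finally show "(\<integral>\<^sup>+\<omega>. Kf (A \<omega>) (B \<omega>) s t \<partial>M) = emeasure M {\<omega>\<in>space M. A \<omega> \<le> min s t \<and> max s t < B \<omega>}
       + emeasure M {\<omega>\<in>space M. B \<omega> \<le> min s t \<and> max s t < A \<omega>}" .
  qed
  finally show ?thesis .
qed

lemma sq_nn_integral_compare: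
  assumes "sigma_finite_measure M1" "sigma_finite_measure M2"
    and [measurable]: "A1 \<in> borel_measurable M1" "B1 \<in> borel_measurable M1"
    "A2 \<in> borel_measurable M2" "B2 \<in> borel_measurable M2"
    and c1: "\<And>u v. emeasure M1 {\<omega>\<in>space M1. A1 \<omega> \<le> u \<and> v < B1 \<omega>} \<le> emeasure M2 {\<omega>\<in>space M2. A2 \<omega> \<le> u \<and> v < B2 \<omega>}"
    and c2: "\<And>u v. emeasure M1 {\<omega>\<in>space M1. B1 \<omega> \<le> u \<and> v < A1 \<omega>} \<le> emeasure M2 {\<omega>\<in>space M2. B2 \<omega> \<le> u \<and> v < A2 \<omega>}"
  shows "(\<integral>\<^sup>+\<omega>. ennreal ((A1 \<omega> - B1 \<omega>)\<^sup>2) \<partial>M1) \<le> (\<integral>\<^sup>+\<omega>. ennreal ((A2 \<omega> - B2 \<omega>)\<^sup>2) \<partial>M2)"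
  unfolding sq_nn_integral[OF assms(1,3,4)] sq_nn_integral[OF assms(2,5,6)]
  by (intro nn_integral_mono add_mono c1 c2)

context lsetup begin

lemma M0_compare:
  assumes g: "\<gamma> \<in> couplings N p"
  shows "(\<integral>\<^sup>+z. ennreal ((Xs z - fst z)\<^sup>2) \<partial>M0) \<le> (\<integral>\<^sup>+x. ennreal ((fst x - snd x)\<^sup>2) \<partial>\<gamma>)"
proof (rule sq_nn_integral_compare)
  interpret G: prob_space \<gamma> by (rule coupling_props(1)[OF g])
  have sg: "sets \<gamma> = sets (borel \<Otimes>\<^sub>M borel)" by (rule coupling_props(2)[OF g])
  have spg: "space \<gamma> = UNIV" by (rule coupling_props(3)[OF g])
  show "sigma_finite_measure M0" by unfold_locales
  show "sigma_finite_measure \<gamma>" by unfold_locales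
  show "Xs \<in> borel_measurable M0" "fst \<in> borel_measurable M0" by measurable
  show "fst \<in> borel_measurable \<gamma>" "snd \<in> borel_measurable \<gamma>"
    by (simp_all add: measurable_cong_sets[OF sg refl])
  fix u v
  show "emeasure M0 {\<omega> \<in> space M0. Xs \<omega> \<le> u \<and> v < fst \<omega>} \<le> emeasure \<gamma> {\<omega> \<in> space \<gamma>. fst \<omega> \<le> u \<and> v < snd \<omega>}"
    using frechet1[OF g, of u v] by (simp add: M0.emeasure_eq_measure G.emeasure_eq_measure spg)
  show "emeasure M0 {\<omega> \<in> space M0. fst \<omega> \<le> u \<and> v < Xs \<omega>} \<le> emeasure \<gamma> {\<omega> \<in> space \<gamma>. snd \<omega> \<le> u \<and> v < fst \<omega>}"
    using frechet2[OF g, of u v] by (simp add: M0.emeasure_eq_measure G.emeasure_eq_measure spg)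
qed

end

lemma DV:
  fixes f H :: "'a \<Rightarrow> real"
  assumes f[measurable]: "f \<in> borel_measurable M" and fnn: "\<And>x. 0 \<le> f x"
    and pQ: "prob_space (density M (\<lambda>x. ennreal (f x)))"
    and H[measurable]: "H \<in> borel_measurable M"
    and iH: "integrable (density M (\<lambda>x. ennreal (f x))) H"
    and il: "integrable (density M (\<lambda>x. ennreal (f x))) (\<lambda>x. ln (f x))"
    and bound: "(\<integral>\<^sup>+x. ennreal (exp (H x)) \<partial>M) \<le> ennreal c" and c: "c > 0"
  shows "(\<integral>x. H x \<partial>density M (\<lambda>x. ennreal (f x))) - ln c \<le> (\<integral>x. ln (f x) \<partial>density M (\<lambda>x. ennreal (f x)))"
proof -
  define Q where "Q = density M (\<lambda>x. ennreal (f x))"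
  interpret Q: prob_space Q using pQ by (simp add: Q_def)
  have sQ[measurable_cong]: "sets Q = sets M" by (simp add: Q_def)
  define k where "k x = H x - ln (f x) - ln c" for x
  have km[measurable]: "k \<in> borel_measurable M" unfolding k_def by measurable
  have AEpos: "AE x in Q. 0 < f x"
    unfolding Q_def by (subst AE_density) (auto intro!: AE_I2)
  have "(\<integral>\<^sup>+x. ennreal (exp (k x)) \<partial>Q) = (\<integral>\<^sup>+x. ennreal (f x) * ennreal (exp (k x)) \<partial>M)"
    unfolding Q_def by (rule nn_integral_density) measurable
  also have "\<dots> \<le> (\<integral>\<^sup>+x. ennreal (exp (H x) / c) \<partial>M)"
  proof (rule nn_integral_mono)
    fix x
    show "ennreal (f x) * ennreal (exp (k x)) \<le> ennreal (exp (H x) / c)"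
    proof (cases "f x > 0")
      case True
      have "f x * exp (k x) = exp (H x) / c"
        using True c by (simp add: k_def exp_diff)
      thus ?thesis using fnn[of x] by (simp add: ennreal_mult[symmetric])
    next
      case False
      hence "f x = 0" using fnn[of x] by simp
      thus ?thesis by simp
    qed
  qed
  also have "\<dots> = (\<integral>\<^sup>+x. ennreal (1/c) * ennreal (exp (H x)) \<partial>M)"
    using c by (intro nn_integral_cong) (simp add: ennreal_mult[symmetric])
  also have "\<dots> = ennreal (1/c) * (\<integral>\<^sup>+x. ennreal (exp (H x)) \<partial>M)"
    by (rule nn_integral_cmult) measurable
  also have "\<dots> \<le> ennreal (1/c) * ennreal c" by (intro mult_left_mono bound) simp
  also have "\<dots> = 1" using c by (simp add: ennreal_mult[symmetric])
  finally have nn1: "(\<integral>\<^sup>+x. ennreal (exp (k x)) \<partial>Q) \<le> 1" .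
  have lt: "(\<integral>\<^sup>+x. ennreal (exp (k x)) \<partial>Q) < \<top>"
    using order.strict_trans1[OF nn1 ennreal_one_less_top] .
  have ik: "integrable Q (\<lambda>x. exp (k x))"
    by (rule integrableI_nonneg) (use lt in auto)
  have "(\<integral>x. exp (k x) \<partial>Q) \<le> 1"
  proof -
    have "ennreal (\<integral>x. exp (k x) \<partial>Q) = (\<integral>\<^sup>+x. ennreal (exp (k x)) \<partial>Q)"
      by (rule nn_integral_eq_integral[symmetric]) (use ik in auto)
    thus ?thesis using nn1 by (metis ennreal_le_1)
  qed
  moreover have iHQ: "integrable Q H" using iH by (simp add: Q_def)
  moreover have ilQ: "integrable Q (\<lambda>x. ln (f x))" using il by (simp add: Q_def)
  moreover have ik2: "integrable Q (\<lambda>x. 1 + k x)"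
    unfolding k_def by (intro Bochner_Integration.integrable_add Bochner_Integration.integrable_diff Q.integrable_const iHQ ilQ)
  moreover have "(\<integral>x. 1 + k x \<partial>Q) \<le> (\<integral>x. exp (k x) \<partial>Q)"
    by (rule integral_mono[OF ik2 ik]) (rule exp_ge_add_one_self)
  ultimately have "(\<integral>x. 1 + k x \<partial>Q) \<le> 1" by linarith
  moreover have "(\<integral>x. 1 + k x \<partial>Q) = 1 + (\<integral>x. H x \<partial>Q) - (\<integral>x. ln (f x) \<partial>Q) - ln c"
    unfolding k_def using iHQ ilQ by (simp add: Q.prob_space)
  ultimately show ?thesis unfolding Q_def by simp
qed

lemma sq_comb_bound: "(a * u + b * v + cc)\<^sup>2 \<le> 3 * ((a * u)\<^sup>2 + (b * v)\<^sup>2 + cc\<^sup>2)" for a b u v cc :: real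
proof -
  have "0 \<le> (a * u - b * v)\<^sup>2 + (a * u - cc)\<^sup>2 + (b * v - cc)\<^sup>2" by simp
  thus ?thesis by (simp add: power2_eq_square algebra_simps)
qed

lemma sq_comb_integrable:
  fixes f g :: "'a \<Rightarrow> real"
  assumes "prob_space M" and [measurable]: "f \<in> borel_measurable M" "g \<in> borel_measurable M"
    and i1: "integrable M (\<lambda>x. (f x)\<^sup>2)" and i2: "integrable M (\<lambda>x. (g x)\<^sup>2)"
  shows "integrable M (\<lambda>x. (a * f x + b * g x + cc)\<^sup>2)"
proof -
  interpret prob_space M by fact
  have i: "integrable M (\<lambda>x. 3 * (a\<^sup>2 * (f x)\<^sup>2 + b\<^sup>2 * (g x)\<^sup>2 + cc\<^sup>2))"
    using i1 i2 by (intro integrable_mult_right Bochner_Integration.integrable_add integrable_const) auto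
  have m: "(\<lambda>x. (a * f x + b * g x + cc)\<^sup>2) \<in> borel_measurable M" by measurable
  have ae: "AE x in M. norm ((a * f x + b * g x + cc)\<^sup>2) \<le> norm (3 * (a\<^sup>2 * (f x)\<^sup>2 + b\<^sup>2 * (g x)\<^sup>2 + cc\<^sup>2))"
    using sq_comb_bound[of a "f _" b "g _" cc] by (intro AE_I2) (simp add: power_mult_distrib)
  show ?thesis by (rule Bochner_Integration.integrable_bound[OF i m ae])
qed

lemma lin_integrable:
  fixes f :: "'a \<Rightarrow> real"
  assumes "prob_space M" and [measurable]: "f \<in> borel_measurable M"
    and i1: "integrable M (\<lambda>x. (f x)\<^sup>2)"
  shows "integrable M f"
proof -
  interpret prob_space M by fact
  have i: "integrable M (\<lambda>x. 1 + (f x)\<^sup>2)" using i1 by auto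
  have ae: "AE x in M. norm (f x) \<le> norm (1 + (f x)\<^sup>2)"
  proof (intro AE_I2)
    fix x
    have "\<bar>f x\<bar> \<le> 1 + (f x)\<^sup>2"
    proof (cases "\<bar>f x\<bar> \<le> 1")
      case True thus ?thesis by (simp add: add_increasing2)
    next
      case False
      hence "\<bar>f x\<bar> * 1 \<le> \<bar>f x\<bar> * \<bar>f x\<bar>" by (intro mult_left_mono) auto
      hence "\<bar>f x\<bar> \<le> \<bar>f x\<bar> * \<bar>f x\<bar>" by simp
      thus ?thesis by (simp add: power2_eq_square abs_mult_self_eq)
    qed
    thus "norm (f x) \<le> norm (1 + (f x)\<^sup>2)" by simp
  qed
  show ?thesis by (rule Bochner_Integration.integrable_bound[OF i _ ae]) measurable
qed

context gauss begin

lemma N_integrable_iff: "integrable N g \<longleftrightarrow> integrable lborel (\<lambda>x. normal_density \<mu> \<sigma> x * g x)"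
  if "g \<in> borel_measurable borel" for g :: "real \<Rightarrow> real"
  unfolding gaussian_def using that by (subst integrable_density) auto

lemma N_integral: "(\<integral>x. g x \<partial>N) = (\<integral>x. normal_density \<mu> \<sigma> x * g x \<partial>lborel)" if "g \<in> borel_measurable borel"
  for g :: "real \<Rightarrow> real"
  unfolding gaussian_def using that by (subst integral_density) auto

lemma N_int_c2: "integrable N (\<lambda>x. (x - \<mu>)\<^sup>2)"
  using integrable_normal_moment[OF \<sigma>_pos, of \<mu> 2] by (simp add: N_integrable_iff)

lemma N_int_c1: "integrable N (\<lambda>x. x - \<mu>)"
  using integrable_normal_moment[OF \<sigma>_pos, of \<mu> 1] by (simp add: N_integrable_iff)

lemma N_var: "(\<integral>x. (x - \<mu>)\<^sup>2 \<partial>N) = \<sigma>\<^sup>2"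
  using integral_normal_moment_even[OF \<sigma>_pos, of \<mu> 1] by (simp add: N_integral)

lemma N_int_x: "integrable N (\<lambda>x. x)"
proof -
  interpret prob_space N by (rule N_prob)
  have "integrable N (\<lambda>x. (x - \<mu>) + \<mu>)" by (rule Bochner_Integration.integrable_add[OF N_int_c1 integrable_const])
  thus ?thesis by simp
qed

lemma N_mean: "(\<integral>x. x \<partial>N) = \<mu>"
  using integral_normal_moment_nz_1[OF \<sigma>_pos, of \<mu>] by (simp add: N_integral)

lemma N_int_sq: "integrable N (\<lambda>x. x\<^sup>2)"
proof -
  interpret prob_space N by (rule N_prob)
  have "integrable N (\<lambda>x. (1 * (x - \<mu>) + 0 * (x - \<mu>) + \<mu>)\<^sup>2)"
    by (rule sq_comb_integrable[OF N_prob _ _ N_int_c2 N_int_c2]) auto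
  thus ?thesis by simp
qed

lemma gauss_exp_int:
  assumes D: "D > 0"
  shows "(\<integral>\<^sup>+x. ennreal (exp ((x - \<mu>)\<^sup>2 / (2 * \<sigma>\<^sup>2) - (x - w)\<^sup>2 / (2 * D))) \<partial>N) = ennreal (sqrt D / \<sigma>)"
proof -
  have pt: "normal_density \<mu> \<sigma> x * exp ((x - \<mu>)\<^sup>2 / (2 * \<sigma>\<^sup>2) - (x - w)\<^sup>2 / (2 * D))
        = sqrt D / \<sigma> * normal_density w (sqrt D) x" for x
  proof -
    have s1: "sqrt (2 * pi * \<sigma>\<^sup>2) = sqrt (2 * pi) * \<sigma>" using \<sigma>_pos by (simp add: real_sqrt_mult)
    have s2: "sqrt (2 * pi * (sqrt D)\<^sup>2) = sqrt (2 * pi) * sqrt D" using D by (simp add: real_sqrt_mult)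
    have e: "exp (- (x - \<mu>)\<^sup>2 / (2 * \<sigma>\<^sup>2)) * exp ((x - \<mu>)\<^sup>2 / (2 * \<sigma>\<^sup>2) - (x - w)\<^sup>2 / (2 * D))
        = exp (- (x - w)\<^sup>2 / (2 * D))"
    proof -
      have m1: "- (x - \<mu>)\<^sup>2 / (2 * \<sigma>\<^sup>2) = - ((x - \<mu>)\<^sup>2 / (2 * \<sigma>\<^sup>2))" by (rule minus_divide_left[symmetric])
      have m2: "- (x - w)\<^sup>2 / (2 * D) = - ((x - w)\<^sup>2 / (2 * D))" by (rule minus_divide_left[symmetric])
      have "- (x - \<mu>)\<^sup>2 / (2 * \<sigma>\<^sup>2) + ((x - \<mu>)\<^sup>2 / (2 * \<sigma>\<^sup>2) - (x - w)\<^sup>2 / (2 * D)) = - (x - w)\<^sup>2 / (2 * D)"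
        unfolding m1 m2 by linarith
      thus ?thesis by (simp only: exp_add[symmetric])
    qed
    have sD: "(sqrt D)\<^sup>2 = D" using D by simp
    have s3: "sqrt (2 * pi * D) = sqrt (2 * pi) * sqrt D" by (simp add: real_sqrt_mult)
    have n1: "normal_density \<mu> \<sigma> x = 1 / (sqrt (2 * pi) * \<sigma>) * exp (- (x - \<mu>)\<^sup>2 / (2 * \<sigma>\<^sup>2))"
      by (simp only: normal_density_def s1)
    have n2: "normal_density w (sqrt D) x = 1 / (sqrt (2 * pi) * sqrt D) * exp (- (x - w)\<^sup>2 / (2 * D))"
      by (simp only: normal_density_def sD s3)
    have "normal_density \<mu> \<sigma> x * exp ((x - \<mu>)\<^sup>2 / (2 * \<sigma>\<^sup>2) - (x - w)\<^sup>2 / (2 * D))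
        = 1 / (sqrt (2 * pi) * \<sigma>) * exp (- (x - w)\<^sup>2 / (2 * D))"
      by (simp only: n1 mult.assoc e)
    also have "\<dots> = sqrt D / \<sigma> * (1 / (sqrt (2 * pi) * sqrt D) * exp (- (x - w)\<^sup>2 / (2 * D)))"
      using D \<sigma>_pos by simp
    also have "\<dots> = sqrt D / \<sigma> * normal_density w (sqrt D) x" by (simp only: n2)
    finally show ?thesis .
  qed
  have "(\<integral>\<^sup>+x. ennreal (exp ((x - \<mu>)\<^sup>2 / (2 * \<sigma>\<^sup>2) - (x - w)\<^sup>2 / (2 * D))) \<partial>N)
      = (\<integral>\<^sup>+x. ennreal (normal_density \<mu> \<sigma> x) * ennreal (exp ((x - \<mu>)\<^sup>2 / (2 * \<sigma>\<^sup>2) - (x - w)\<^sup>2 / (2 * D))) \<partial>lborel)"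
    unfolding gaussian_def by (rule nn_integral_density) auto
  also have "\<dots> = (\<integral>\<^sup>+x. ennreal (sqrt D / \<sigma>) * ennreal (normal_density w (sqrt D) x) \<partial>lborel)"
    using D \<sigma>_pos by (intro nn_integral_cong) (simp add: ennreal_mult[symmetric] pt)
  also have "\<dots> = ennreal (sqrt D / \<sigma>) * (\<integral>\<^sup>+x. ennreal (normal_density w (sqrt D) x) \<partial>lborel)"
    by (rule nn_integral_cmult) auto
  also have "(\<integral>\<^sup>+x. ennreal (normal_density w (sqrt D) x) \<partial>lborel) = 1"
  proof -
    interpret P: prob_space "density lborel (normal_density w (sqrt D))"
      using D by (intro prob_space_normal_density) auto
    have "emeasure (density lborel (normal_density w (sqrt D))) UNIV = 1"
      using P.emeasure_space_1 by simp
    thus ?thesis by (simp add: emeasure_density)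
  qed
  finally show ?thesis by simp
qed

end

lemma distr_snd_prod:
  assumes "prob_space M" "sigma_finite_measure K" "sets K = sets borel"
  shows "distr (M \<Otimes>\<^sub>M K) borel snd = K"
proof (rule measure_eqI)
  interpret M: prob_space M by fact
  interpret K: sigma_finite_measure K by fact
  have spK: "space K = UNIV" using sets_eq_imp_space_eq[OF assms(3)] by simp
  show "sets (distr (M \<Otimes>\<^sub>M K) borel snd) = sets K" using assms(3) by simp
  fix A assume A: "A \<in> sets (distr (M \<Otimes>\<^sub>M K) borel snd)"
  hence A': "A \<in> sets K" using assms(3) by simp
  have "emeasure (distr (M \<Otimes>\<^sub>M K) borel snd) A = emeasure (M \<Otimes>\<^sub>M K) (snd -` A \<inter> space (M \<Otimes>\<^sub>M K))"
    using A by (intro emeasure_distr) (auto simp: measurable_cong_sets[OF refl assms(3)[symmetric]])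
  also have "snd -` A \<inter> space (M \<Otimes>\<^sub>M K) = space M \<times> A"
    using A' spK by (auto simp: space_pair_measure)
  also have "emeasure (M \<Otimes>\<^sub>M K) (space M \<times> A) = emeasure M (space M) * emeasure K A"
    using A' by (intro K.emeasure_pair_measure_Times) auto
  finally show "emeasure (distr (M \<Otimes>\<^sub>M K) borel snd) A = emeasure K A"
    by (simp add: M.emeasure_space_1)
qed

lemma distr_fst_prod:
  assumes "sigma_finite_measure K" "prob_space M" "sets K = sets T"
  shows "distr (K \<Otimes>\<^sub>M M) T fst = K"
proof (rule measure_eqI)
  interpret M: prob_space M by fact
  interpret K: sigma_finite_measure K by fact
  have spK: "space K = space T" using sets_eq_imp_space_eq[OF assms(3)] by simp
  show "sets (distr (K \<Otimes>\<^sub>M M) T fst) = sets K" using assms(3) by simp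
  fix A assume A: "A \<in> sets (distr (K \<Otimes>\<^sub>M M) T fst)"
  hence A': "A \<in> sets K" using assms(3) by simp
  have "emeasure (distr (K \<Otimes>\<^sub>M M) T fst) A = emeasure (K \<Otimes>\<^sub>M M) (fst -` A \<inter> space (K \<Otimes>\<^sub>M M))"
    using A by (intro emeasure_distr) (auto simp: measurable_cong_sets[OF refl assms(3)[symmetric]])
  also have "fst -` A \<inter> space (K \<Otimes>\<^sub>M M) = A \<times> space M"
    using A' sets.sets_into_space[OF A'] by (auto simp: space_pair_measure)
  also have "emeasure (K \<Otimes>\<^sub>M M) (A \<times> space M) = emeasure K A * emeasure M (space M)"
    using A' by (intro M.emeasure_pair_measure_Times) auto
  finally show "emeasure (distr (K \<Otimes>\<^sub>M M) T fst) A = emeasure K A"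
    by (simp add: M.emeasure_space_1)
qed

context lsetup begin

lemma distr_fst_M0: "distr M0 borel fst = p"
  using p_prob U_prob by (intro distr_fst_prod) (auto simp: prob_space_imp_sigma_finite)

lemma M0_int_Xs_sq: "integrable M0 (\<lambda>z. (Xs z)\<^sup>2)"
proof -
  have "integrable (distr M0 borel Xs) (\<lambda>x. x\<^sup>2)" using N_int_sq by (simp add: distr_Xs)
  thus ?thesis by (subst (asm) integrable_distr_eq) auto
qed

lemma M0_Xs_mean: "(\<integral>z. Xs z \<partial>M0) = \<mu>"
proof -
  have "(\<integral>z. Xs z \<partial>M0) = (\<integral>x. x \<partial>distr M0 borel Xs)" by (subst integral_distr) auto
  thus ?thesis using N_mean by (simp add: distr_Xs)
qed

lemma M0_Xs_var: "(\<integral>z. (Xs z - \<mu>)\<^sup>2 \<partial>M0) = \<sigma>\<^sup>2"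
proof -
  have "(\<integral>z. (Xs z - \<mu>)\<^sup>2 \<partial>M0) = (\<integral>x. (x - \<mu>)\<^sup>2 \<partial>distr M0 borel Xs)" by (subst integral_distr) auto
  thus ?thesis using N_var by (simp add: distr_Xs)
qed

lemma M0_int_fst_sq: "integrable p (\<lambda>x. x\<^sup>2) \<Longrightarrow> integrable M0 (\<lambda>z. (fst z)\<^sup>2)"
proof -
  assume "integrable p (\<lambda>x. x\<^sup>2)"
  hence "integrable (distr M0 borel fst) (\<lambda>x. x\<^sup>2)" by (simp add: distr_fst_M0)
  thus ?thesis by (subst (asm) integrable_distr_eq) auto
qed

lemma M0_fst_mean: "(\<integral>z. fst z \<partial>M0) = (\<integral>x. x \<partial>p)"
proof -
  have "(\<integral>z. fst z \<partial>M0) = (\<integral>x. x \<partial>distr M0 borel fst)" by (subst integral_distr) auto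
  thus ?thesis by (simp add: distr_fst_M0)
qed

lemma coupling_int:
  assumes g: "\<gamma> \<in> couplings N p" and ip: "integrable p (\<lambda>x. x\<^sup>2)"
  shows "integrable \<gamma> (\<lambda>x. (fst x - snd x)\<^sup>2)"
proof -
  have pg: "prob_space \<gamma>" and sg: "sets \<gamma> = sets (borel \<Otimes>\<^sub>M borel)" using coupling_props[OF g] by auto
  have mf[measurable]: "fst \<in> borel_measurable \<gamma>" "snd \<in> borel_measurable \<gamma>"
    by (simp_all add: measurable_cong_sets[OF sg refl])
  have d1: "distr \<gamma> borel fst = N" and d2: "distr \<gamma> borel snd = p" using g by (auto simp: couplings_def)
  have i1: "integrable \<gamma> (\<lambda>x. (fst x)\<^sup>2)"
    using N_int_sq unfolding d1[symmetric] by (subst (asm) integrable_distr_eq) auto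
  have i2: "integrable \<gamma> (\<lambda>x. (snd x)\<^sup>2)"
    using ip unfolding d2[symmetric] by (subst (asm) integrable_distr_eq) auto
  have "integrable \<gamma> (\<lambda>x. (1 * fst x + (-1) * snd x + 0)\<^sup>2)"
    by (rule sq_comb_integrable[OF pg mf i1 i2])
  thus ?thesis by simp
qed

lemma couplings_ne: "couplings N p \<noteq> {}"
proof -
  interpret NP: pair_prob_space N p using N_prob p_prob by (simp add: pair_prob_space_def pair_sigma_finite_def prob_space_imp_sigma_finite)
  have "N \<Otimes>\<^sub>M p \<in> couplings N p"
    unfolding couplings_def joint_distr_def
    using NP.prob_space_axioms N_prob p_prob
    by (auto intro!: sets_pair_measure_cong distr_fst_prod distr_snd_prod simp: prob_space_imp_sigma_finite)
  thus ?thesis by auto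
qed

lemma cstar_le:
  assumes ip: "integrable p (\<lambda>x. x\<^sup>2)" and W: "W2sq N p \<le> P"
  shows "(\<integral>z. (Xs z - fst z)\<^sup>2 \<partial>M0) \<le> P"
proof -
  have iM: "integrable M0 (\<lambda>z. (Xs z - fst z)\<^sup>2)"
    using sq_comb_integrable[OF M0_prob _ _ M0_int_Xs_sq M0_int_fst_sq[OF ip], of 1 "-1" 0] by simp
  have "(\<integral>z. (Xs z - fst z)\<^sup>2 \<partial>M0) \<le> W2sq N p"
    unfolding W2sq_def
  proof (rule cINF_greatest[OF couplings_ne])
    fix \<gamma> assume g: "\<gamma> \<in> couplings N p"
    have ig: "integrable \<gamma> (\<lambda>x. (fst x - snd x)\<^sup>2)" by (rule coupling_int[OF g ip])
    have "ennreal (\<integral>z. (Xs z - fst z)\<^sup>2 \<partial>M0) = (\<integral>\<^sup>+z. ennreal ((Xs z - fst z)\<^sup>2) \<partial>M0)"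
      by (rule nn_integral_eq_integral[symmetric]) (use iM in auto)
    also have "\<dots> \<le> (\<integral>\<^sup>+x. ennreal ((fst x - snd x)\<^sup>2) \<partial>\<gamma>)" by (rule M0_compare[OF g])
    also have "\<dots> = ennreal (\<integral>x. (fst x - snd x)\<^sup>2 \<partial>\<gamma>)"
      by (rule nn_integral_eq_integral) (use ig in auto)
    finally show "(\<integral>z. (Xs z - fst z)\<^sup>2 \<partial>M0) \<le> (\<integral>x. (fst x - snd x)\<^sup>2 \<partial>\<gamma>)"
      by (rule ennreal_le_iff[THEN iffD1, rotated]) simp
  qed
  thus ?thesis using W by simp
qed

end

context lsetup begin

lemma MI_unpack:
  assumes jd: "joint_distr \<pi>" and fm: "distr \<pi> borel fst = p" and MI: "mutual_info \<pi> \<le> ereal r"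
  defines "q \<equiv> distr \<pi> borel snd"
  obtains fr where "fr \<in> borel_measurable (borel \<Otimes>\<^sub>M borel)" "\<And>x. 0 \<le> fr x"
    "density (p \<Otimes>\<^sub>M q) (\<lambda>x. ennreal (fr x)) = \<pi>"
    "integrable \<pi> (\<lambda>x. ln (fr x))" "(\<integral>x. ln (fr x) \<partial>\<pi>) \<le> r"
proof -
  interpret Pi: prob_space \<pi> using jd by (simp add: joint_distr_def)
  have s\<pi>: "sets \<pi> = sets (borel \<Otimes>\<^sub>M borel)" using jd by (simp add: joint_distr_def)
  have mfst: "fst \<in> measurable \<pi> borel" "snd \<in> measurable \<pi> borel"
    by (simp_all add: measurable_cong_sets[OF s\<pi> refl])
  have q_prob: "prob_space q" unfolding q_def by (rule Pi.prob_space_distr[OF mfst(2)])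
  have sq: "sets q = sets borel" by (simp add: q_def)
  define \<nu> where "\<nu> = p \<Otimes>\<^sub>M q"
  have \<nu>_eq: "distr \<pi> borel fst \<Otimes>\<^sub>M distr \<pi> borel snd = \<nu>" by (simp add: fm \<nu>_def q_def)
  interpret PQ: pair_prob_space p q using p_prob q_prob by (simp add: pair_prob_space_def pair_sigma_finite_def prob_space_imp_sigma_finite)
  have \<nu>_prob: "prob_space \<nu>" unfolding \<nu>_def by (rule PQ.prob_space_axioms)
  interpret V: prob_space \<nu> by (rule \<nu>_prob)
  have s\<nu>: "sets \<nu> = sets (borel \<Otimes>\<^sub>M borel)" unfolding \<nu>_def by (intro sets_pair_measure_cong) (auto simp: sq)
  define RN where "RN = RN_deriv \<nu> \<pi>"
  have cond: "absolutely_continuous \<nu> \<pi> \<and> integrable \<pi> (\<lambda>x. ln (enn2real (RN x)))"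
    and le: "(\<integral>x. ln (enn2real (RN x)) \<partial>\<pi>) \<le> r"
  proof -
    have "mutual_info \<pi> = (if absolutely_continuous \<nu> \<pi> \<and> integrable \<pi> (\<lambda>x. ln (enn2real (RN x)))
        then ereal (\<integral>x. ln (enn2real (RN x)) \<partial>\<pi>) else \<infinity>)"
      unfolding mutual_info_def Let_def \<nu>_eq RN_def ..
    with MI show "absolutely_continuous \<nu> \<pi> \<and> integrable \<pi> (\<lambda>x. ln (enn2real (RN x)))"
      and "(\<integral>x. ln (enn2real (RN x)) \<partial>\<pi>) \<le> r" by (auto split: if_splits)
  qed
  have dens: "density \<nu> RN = \<pi>"
    unfolding RN_def using cond s\<pi> s\<nu> by (intro V.density_RN_deriv) auto
  have fin: "AE x in \<nu>. RN x \<noteq> \<infinity>"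
    unfolding RN_def using cond s\<pi> s\<nu> by (intro V.RN_deriv_finite) (auto simp: prob_space_imp_sigma_finite Pi.prob_space_axioms)
  define fr where "fr x = enn2real (RN x)" for x
  have RNm: "RN \<in> borel_measurable (borel \<Otimes>\<^sub>M borel)"
    using borel_measurable_RN_deriv[of \<nu> \<pi>] unfolding RN_def by (simp add: measurable_cong_sets[OF s\<nu> refl])
  have frm: "fr \<in> borel_measurable (borel \<Otimes>\<^sub>M borel)"
    unfolding fr_def using RNm by measurable
  have dens2: "density \<nu> (\<lambda>x. ennreal (fr x)) = \<pi>"
  proof -
    have "density \<nu> (\<lambda>x. ennreal (fr x)) = density \<nu> RN"
    proof (rule density_cong)
      show "(\<lambda>x. ennreal (fr x)) \<in> borel_measurable \<nu>"
        using frm by (simp add: measurable_cong_sets[OF s\<nu> refl])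
      show "RN \<in> borel_measurable \<nu>" unfolding RN_def by simp
      show "AE x in \<nu>. ennreal (fr x) = RN x"
        using fin unfolding RN_def fr_def by eventually_elim (simp add: less_top[symmetric])
    qed
    thus ?thesis using dens by simp
  qed
  show ?thesis
  proof (rule that)
    show "fr \<in> borel_measurable (borel \<Otimes>\<^sub>M borel)" by (rule frm)
    show "\<And>x. 0 \<le> fr x" by (simp add: fr_def)
    show "density (p \<Otimes>\<^sub>M q) (\<lambda>x. ennreal (fr x)) = \<pi>" using dens2 by (simp add: \<nu>_def)
    show "integrable \<pi> (\<lambda>x. ln (fr x))" using cond by (simp add: fr_def)
    show "(\<integral>x. ln (fr x) \<partial>\<pi>) \<le> r" using le by (simp add: fr_def)
  qed
qed

end

context lsetup begin

lemma young_sq: "lam > 0 \<Longrightarrow> (u + v)\<^sup>2 \<le> (1 + lam) * u\<^sup>2 + (1 + 1/lam) * v\<^sup>2" for u v lam :: real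
proof -
  assume lam: "lam > 0"
  have "0 \<le> (lam * u - v)\<^sup>2 / lam" using lam by simp
  also have "(lam * u - v)\<^sup>2 / lam = lam * u\<^sup>2 - 2 * u * v + v\<^sup>2 / lam"
    using lam by (simp add: power2_eq_square field_simps)
  finally have "2 * u * v \<le> lam * u\<^sup>2 + v\<^sup>2 / lam" by simp
  thus ?thesis by (simp add: power2_eq_square algebra_simps)
qed

lemma pi_bound:
  assumes ip: "integrable p (\<lambda>x. x\<^sup>2)" and jd: "joint_distr \<pi>" and fm: "distr \<pi> borel fst = p"
    and MI: "mutual_info \<pi> \<le> ereal r"
    and ic: "integrable \<pi> (\<lambda>x. (fst x - snd x)\<^sup>2)" and lam: "lam > 0"
  shows "\<sigma>\<^sup>2 * exp (-2*r) \<le> (1+lam) * (\<integral>z. (Xs z - c - fst z)\<^sup>2 \<partial>M0) + (1 + 1/lam) * (\<integral>x. (fst x - snd x)\<^sup>2 \<partial>\<pi>)"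
proof -
  define q where "q = distr \<pi> borel snd"
  obtain fr where frm: "fr \<in> borel_measurable (borel \<Otimes>\<^sub>M borel)" and frnn: "\<And>x. 0 \<le> fr x"
    and dens: "density (p \<Otimes>\<^sub>M q) (\<lambda>x. ennreal (fr x)) = \<pi>"
    and ilog: "integrable \<pi> (\<lambda>x. ln (fr x))" and lelog: "(\<integral>x. ln (fr x) \<partial>\<pi>) \<le> r"
    using MI_unpack[OF jd fm MI] unfolding q_def by blast
  interpret Pi: prob_space \<pi> using jd by (simp add: joint_distr_def)
  have s\<pi>[measurable_cong]: "sets \<pi> = sets (borel \<Otimes>\<^sub>M borel)" using jd by (simp add: joint_distr_def)
  have q_prob: "prob_space q" unfolding q_def by (rule Pi.prob_space_distr) (simp add: measurable_cong_sets[OF s\<pi> refl])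
  have sq[measurable_cong]: "sets q = sets borel" by (simp add: q_def)
  interpret U: prob_space U by (rule U_prob)
  interpret PQ: pair_prob_space p q using p_prob q_prob by (simp add: pair_prob_space_def pair_sigma_finite_def prob_space_imp_sigma_finite)
  define \<Omega> where "\<Omega> = \<pi> \<Otimes>\<^sub>M U"
  define \<nu>t where "\<nu>t = (p \<Otimes>\<^sub>M q) \<Otimes>\<^sub>M U"
  interpret PU: pair_prob_space \<pi> U by (simp add: pair_prob_space_def pair_sigma_finite_def prob_space_imp_sigma_finite Pi.prob_space_axioms U_prob)
  interpret O: prob_space \<Omega> unfolding \<Omega>_def by (rule PU.prob_space_axioms)
  have s\<Omega>[measurable_cong]: "sets \<Omega> = sets ((borel \<Otimes>\<^sub>M borel) \<Otimes>\<^sub>M borel)"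
    unfolding \<Omega>_def by (intro sets_pair_measure_cong s\<pi>) simp
  have s\<nu>t[measurable_cong]: "sets \<nu>t = sets ((borel \<Otimes>\<^sub>M borel) \<Otimes>\<^sub>M borel)"
    unfolding \<nu>t_def by (rule sets_pair_measure_cong[OF sets_pair_measure_cong[OF p_sets sq] U_sets])
  have \<Omega>_dens: "\<Omega> = density \<nu>t (\<lambda>\<omega>. ennreal (fr (fst \<omega>)))"
  proof -
    have "\<Omega> = density (p \<Otimes>\<^sub>M q) (\<lambda>x. ennreal (fr x)) \<Otimes>\<^sub>M density U (\<lambda>_. 1)"
      by (simp add: \<Omega>_def dens density_1)
    also have "\<dots> = density ((p \<Otimes>\<^sub>M q) \<Otimes>\<^sub>M U) (\<lambda>(x,y). ennreal (fr x) * 1)"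
      by (rule pair_measure_density) (use frm in \<open>auto simp: density_1 prob_space_imp_sigma_finite U_prob\<close>)
    finally show ?thesis by (simp add: \<nu>t_def case_prod_beta')
  qed
  define Xt where "Xt \<omega> = Xs (fst (fst \<omega>), snd \<omega>)" for \<omega> :: "(real \<times> real) \<times> real"
  define Yt where "Yt \<omega> = fst (fst \<omega>)" for \<omega> :: "(real \<times> real) \<times> real"
  define Vt where "Vt \<omega> = snd (fst \<omega>)" for \<omega> :: "(real \<times> real) \<times> real"
  have Xtm[measurable]: "Xt \<in> borel_measurable ((borel \<Otimes>\<^sub>M borel) \<Otimes>\<^sub>M borel)" unfolding Xt_def by measurable
  have Ytm[measurable]: "Yt \<in> borel_measurable ((borel \<Otimes>\<^sub>M borel) \<Otimes>\<^sub>M borel)" unfolding Yt_def by measurable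
  have Vtm[measurable]: "Vt \<in> borel_measurable ((borel \<Otimes>\<^sub>M borel) \<Otimes>\<^sub>M borel)" unfolding Vt_def by measurable
  define \<phi> where "\<phi> = (\<lambda>(x :: real \<times> real, y :: real). (fst x, y))"
  have \<phi>m: "\<phi> \<in> measurable \<Omega> (borel \<Otimes>\<^sub>M U)" unfolding \<phi>_def by measurable
  have M0_eq: "M0 = distr \<Omega> (borel \<Otimes>\<^sub>M U) \<phi>"
  proof -
    have "distr \<pi> borel fst \<Otimes>\<^sub>M distr U U (\<lambda>y. y) = distr (\<pi> \<Otimes>\<^sub>M U) (borel \<Otimes>\<^sub>M U) (\<lambda>(x, y). (fst x, y))"
      by (rule pair_measure_distr) (auto simp: prob_space_imp_sigma_finite U_prob)
    thus ?thesis by (simp add: fm \<Omega>_def \<phi>_def)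
  qed
  have tr_int: "(\<integral>z. g z \<partial>M0) = (\<integral>\<omega>. g (\<phi> \<omega>) \<partial>\<Omega>)" if [measurable]: "g \<in> borel_measurable (borel \<Otimes>\<^sub>M borel)" for g :: "real \<times> real \<Rightarrow> real"
    unfolding M0_eq by (rule integral_distr[OF \<phi>m]) simp
  have tr_ible: "integrable M0 g \<Longrightarrow> integrable \<Omega> (\<lambda>\<omega>. g (\<phi> \<omega>))" if [measurable]: "g \<in> borel_measurable (borel \<Otimes>\<^sub>M borel)" for g :: "real \<times> real \<Rightarrow> real"
    unfolding M0_eq by (subst (asm) integrable_distr_eq[OF \<phi>m]) simp_all
  have Xt_phi: "Xt \<omega> = Xs (\<phi> \<omega>)" "Yt \<omega> = fst (\<phi> \<omega>)" for \<omega>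
    by (auto simp: Xt_def Yt_def \<phi>_def case_prod_beta')
  have t1: "(\<integral>\<omega>. (Xt \<omega> - \<mu>)\<^sup>2 \<partial>\<Omega>) = \<sigma>\<^sup>2"
    using tr_int[of "\<lambda>z. (Xs z - \<mu>)\<^sup>2"] M0_Xs_var by (simp add: Xt_phi)
  have t2a: "integrable \<Omega> (\<lambda>\<omega>. (Xt \<omega>)\<^sup>2)"
    using tr_ible[of "\<lambda>z. (Xs z)\<^sup>2"] M0_int_Xs_sq by (simp add: Xt_phi)
  have t2b: "integrable \<Omega> (\<lambda>\<omega>. (Yt \<omega>)\<^sup>2)"
    using tr_ible[of "\<lambda>z. (fst z)\<^sup>2"] M0_int_fst_sq[OF ip] by (simp add: Xt_phi)
  have t3: "(\<integral>\<omega>. (Xt \<omega> - c - Yt \<omega>)\<^sup>2 \<partial>\<Omega>) = (\<integral>z. (Xs z - c - fst z)\<^sup>2 \<partial>M0)"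
    using tr_int[of "\<lambda>z. (Xs z - c - fst z)\<^sup>2"] by (simp add: Xt_phi)
  have dfst: "distr \<Omega> (borel \<Otimes>\<^sub>M borel) fst = \<pi>"
    unfolding \<Omega>_def by (rule distr_fst_prod) (auto simp: prob_space_imp_sigma_finite Pi.prob_space_axioms U_prob s\<pi>)
  have fstm: "fst \<in> measurable \<Omega> (borel \<Otimes>\<^sub>M borel)" by measurable
  have tr2_int: "(\<integral>x. g x \<partial>\<pi>) = (\<integral>\<omega>. g (fst \<omega>) \<partial>\<Omega>)" if [measurable]: "g \<in> borel_measurable (borel \<Otimes>\<^sub>M borel)" for g :: "real \<times> real \<Rightarrow> real"
    unfolding dfst[symmetric] by (rule integral_distr[OF fstm]) simp
  have tr2_ible: "integrable \<pi> g \<Longrightarrow> integrable \<Omega> (\<lambda>\<omega>. g (fst \<omega>))" if [measurable]: "g \<in> borel_measurable (borel \<Otimes>\<^sub>M borel)" for g :: "real \<times> real \<Rightarrow> real"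
    unfolding dfst[symmetric] by (subst (asm) integrable_distr_eq[OF fstm]) simp_all
  have ipisnd: "integrable \<pi> (\<lambda>x. (snd x)\<^sup>2)"
  proof -
    have i1: "integrable \<pi> (\<lambda>x. (fst x)\<^sup>2)"
      using ip unfolding fm[symmetric] by (subst (asm) integrable_distr_eq) (auto simp: measurable_cong_sets[OF s\<pi> refl])
    have "integrable \<pi> (\<lambda>x. (1 * fst x + (-1) * (fst x - snd x) + 0)\<^sup>2)"
      by (rule sq_comb_integrable[OF Pi.prob_space_axioms _ _ i1 ic]) (auto simp: measurable_cong_sets[OF s\<pi> refl])
    thus ?thesis by simp
  qed
  have t4a: "integrable \<Omega> (\<lambda>\<omega>. (Vt \<omega>)\<^sup>2)"
    using tr2_ible[of "\<lambda>x. (snd x)\<^sup>2"] ipisnd by (simp add: Vt_def)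
  have t4: "(\<integral>\<omega>. (Yt \<omega> - Vt \<omega>)\<^sup>2 \<partial>\<Omega>) = (\<integral>x. (fst x - snd x)\<^sup>2 \<partial>\<pi>)"
    using tr2_int[of "\<lambda>x. (fst x - snd x)\<^sup>2"] by (simp add: Yt_def Vt_def)
  have frm': "(\<lambda>\<omega>. fr (fst \<omega>)) \<in> borel_measurable ((borel \<Otimes>\<^sub>M borel) \<Otimes>\<^sub>M borel)" using frm by measurable
  have t5a: "integrable \<Omega> (\<lambda>\<omega>. ln (fr (fst \<omega>)))"
    using tr2_ible[of "\<lambda>x. ln (fr x)"] ilog frm by simp
  have t5: "(\<integral>\<omega>. ln (fr (fst \<omega>)) \<partial>\<Omega>) \<le> r"
    using tr2_int[of "\<lambda>x. ln (fr x)"] lelog frm by simp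
  define D where "D = \<sigma>\<^sup>2 * exp (-2*r)"
  have Dpos: "D > 0" using \<sigma>_pos by (simp add: D_def)
  have sqD: "sqrt D = \<sigma> * exp (-r)"
  proof -
    have ee: "exp (-2*r) = exp (-r) * exp (-r)"
    proof -
      have "-2*r = (-r) + (-r)" by simp
      thus ?thesis by (simp only: exp_add)
    qed
    have "D = (\<sigma> * exp (-r))\<^sup>2" unfolding D_def ee by (simp add: power2_eq_square)
    thus ?thesis using \<sigma>_pos by simp
  qed
  define hh where "hh v x = (x - \<mu>)\<^sup>2 / (2 * \<sigma>\<^sup>2) - (x - (c + v))\<^sup>2 / (2 * D)" for v x :: real
  define H where "H \<omega> = hh (Vt \<omega>) (Xt \<omega>)" for \<omega>
  have Hm[measurable]: "H \<in> borel_measurable ((borel \<Otimes>\<^sub>M borel) \<Otimes>\<^sub>M borel)"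
    unfolding H_def hh_def by measurable
  define e where "e = (\<integral>\<omega>. (Xt \<omega> - (c + Vt \<omega>))\<^sup>2 \<partial>\<Omega>)"
  have ie: "integrable \<Omega> (\<lambda>\<omega>. (Xt \<omega> - (c + Vt \<omega>))\<^sup>2)"
    using sq_comb_integrable[OF O.prob_space_axioms _ _ t2a t4a, of 1 "-1" "-c"] by (simp add: algebra_simps)
  have iX: "integrable \<Omega> (\<lambda>\<omega>. (Xt \<omega> - \<mu>)\<^sup>2)"
    using sq_comb_integrable[OF O.prob_space_axioms _ _ t2a t2a, of 1 0 "-\<mu>"] by simp
  have iH: "integrable \<Omega> H"
    unfolding H_def hh_def using iX ie by auto
  have intH: "(\<integral>\<omega>. H \<omega> \<partial>\<Omega>) = 1/2 - e / (2 * D)"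
  proof -
    have "(\<integral>\<omega>. H \<omega> \<partial>\<Omega>) = (\<integral>\<omega>. (Xt \<omega> - \<mu>)\<^sup>2 \<partial>\<Omega>) / (2 * \<sigma>\<^sup>2) - e / (2 * D)"
      unfolding H_def hh_def e_def using iX ie by simp
    thus ?thesis using t1 \<sigma>_pos by simp
  qed
  have bound: "(\<integral>\<^sup>+\<omega>. ennreal (exp (H \<omega>)) \<partial>\<nu>t) \<le> ennreal (sqrt D / \<sigma>)"
  proof -
    have "(\<integral>\<^sup>+\<omega>. ennreal (exp (H \<omega>)) \<partial>\<nu>t) = (\<integral>\<^sup>+z. \<integral>\<^sup>+u. ennreal (exp (hh (snd z) (Xs (fst z, u)))) \<partial>U \<partial>(p \<Otimes>\<^sub>M q))"
    proof -
      have "(\<integral>\<^sup>+z. \<integral>\<^sup>+u. ennreal (exp (H (z, u))) \<partial>U \<partial>(p \<Otimes>\<^sub>M q)) = (\<integral>\<^sup>+\<omega>. ennreal (exp (H \<omega>)) \<partial>\<nu>t)"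
        unfolding \<nu>t_def by (rule U.nn_integral_fst) measurable
      thus ?thesis by (simp add: H_def Xt_def Vt_def)
    qed
    also have "\<dots> = (\<integral>\<^sup>+v. \<integral>\<^sup>+y. \<integral>\<^sup>+u. ennreal (exp (hh v (Xs (y, u)))) \<partial>U \<partial>p \<partial>q)"
      by (subst PQ.nn_integral_snd[symmetric]) (simp_all add: hh_def)
    also have "\<dots> = (\<integral>\<^sup>+v. \<integral>\<^sup>+w. ennreal (exp (hh v (Xs w))) \<partial>M0 \<partial>q)"
    proof (intro nn_integral_cong)
      fix v
      show "(\<integral>\<^sup>+y. \<integral>\<^sup>+u. ennreal (exp (hh v (Xs (y, u)))) \<partial>U \<partial>p) = (\<integral>\<^sup>+w. ennreal (exp (hh v (Xs w))) \<partial>M0)"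
        by (rule U.nn_integral_fst[where f="\<lambda>w. ennreal (exp (hh v (Xs w)))"]) (simp add: hh_def)
    qed
    also have "\<dots> = (\<integral>\<^sup>+v. \<integral>\<^sup>+x. ennreal (exp (hh v x)) \<partial>N \<partial>q)"
    proof (intro nn_integral_cong)
      fix v
      show "(\<integral>\<^sup>+w. ennreal (exp (hh v (Xs w))) \<partial>M0) = (\<integral>\<^sup>+x. ennreal (exp (hh v x)) \<partial>N)"
        unfolding distr_Xs[symmetric] by (subst nn_integral_distr) (simp_all add: hh_def)
    qed
    also have "\<dots> = (\<integral>\<^sup>+v. ennreal (sqrt D / \<sigma>) \<partial>q)"
      unfolding hh_def by (intro nn_integral_cong gauss_exp_int Dpos)
    also have "\<dots> = ennreal (sqrt D / \<sigma>)"
      using q_prob by (simp add: prob_space.emeasure_space_1)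
    finally show ?thesis by simp
  qed
  have "(\<integral>\<omega>. H \<omega> \<partial>\<Omega>) - ln (sqrt D / \<sigma>) \<le> (\<integral>\<omega>. ln (fr (fst \<omega>)) \<partial>\<Omega>)"
    using DV[of "\<lambda>\<omega>. fr (fst \<omega>)" \<nu>t H "sqrt D / \<sigma>"] frm' frnn iH t5a O.prob_space_axioms bound Dpos \<sigma>_pos
    unfolding \<Omega>_dens[symmetric] by (simp add: measurable_cong_sets[OF s\<nu>t refl])
  moreover have "ln (sqrt D / \<sigma>) = - r" using \<sigma>_pos by (simp add: sqD)
  ultimately have "1/2 - e / (2 * D) + r \<le> r" using t5 intH by linarith
  hence eD: "D \<le> e" using Dpos by (simp add: field_simps)
  have iA: "integrable \<Omega> (\<lambda>\<omega>. (Xt \<omega> - c - Yt \<omega>)\<^sup>2)"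
    using sq_comb_integrable[OF O.prob_space_axioms _ _ t2a t2b, of 1 "-1" "-c"] by (simp add: algebra_simps)
  have iB: "integrable \<Omega> (\<lambda>\<omega>. (Yt \<omega> - Vt \<omega>)\<^sup>2)"
    using sq_comb_integrable[OF O.prob_space_axioms _ _ t2b t4a, of 1 "-1" 0] by simp
  have "e \<le> (\<integral>\<omega>. (1 + lam) * (Xt \<omega> - c - Yt \<omega>)\<^sup>2 + (1 + 1/lam) * (Yt \<omega> - Vt \<omega>)\<^sup>2 \<partial>\<Omega>)"
    unfolding e_def
  proof (rule integral_mono[OF ie])
    show "integrable \<Omega> (\<lambda>\<omega>. (1 + lam) * (Xt \<omega> - c - Yt \<omega>)\<^sup>2 + (1 + 1/lam) * (Yt \<omega> - Vt \<omega>)\<^sup>2)"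
      using iA iB by auto
    fix \<omega>
    show "(Xt \<omega> - (c + Vt \<omega>))\<^sup>2 \<le> (1 + lam) * (Xt \<omega> - c - Yt \<omega>)\<^sup>2 + (1 + 1/lam) * (Yt \<omega> - Vt \<omega>)\<^sup>2"
      using young_sq[OF lam, of "Xt \<omega> - c - Yt \<omega>" "Yt \<omega> - Vt \<omega>"] by (simp add: algebra_simps)
  qed
  also have "\<dots> = (1 + lam) * (\<integral>z. (Xs z - c - fst z)\<^sup>2 \<partial>M0) + (1 + 1/lam) * (\<integral>x. (fst x - snd x)\<^sup>2 \<partial>\<pi>)"
    using iA iB t3 t4 by simp
  finally show ?thesis using eD by (simp add: D_def)
qed

end

lemma alg1:
  fixes s b a k :: real
  assumes s: "0 \<le> s" and b: "0 \<le> b" and a: "a \<le> s\<^sup>2"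
    and H: "\<And>lam. lam > 0 \<Longrightarrow> k\<^sup>2 \<le> (1+lam) * a + (1+1/lam) * b\<^sup>2"
  shows "k \<le> s + b"
proof (rule field_le_epsilon)
  fix \<epsilon> :: real assume \<epsilon>: "0 < \<epsilon>"
  define \<delta> where "\<delta> = \<epsilon> / 2"
  have \<delta>: "\<delta> > 0" using \<epsilon> by (simp add: \<delta>_def)
  define lam where "lam = (b + \<delta>) / (s + \<delta>)"
  have lam: "lam > 0" using s b \<delta> by (simp add: lam_def)
  have sd: "s + \<delta> > 0" and bd: "b + \<delta> > 0" using s b \<delta> by auto
  have e1: "1 + lam = (s + b + 2 * \<delta>) / (s + \<delta>)"
  proof -
    have one: "(s + \<delta>) / (s + \<delta>) = 1" using sd by simp
    have "1 + lam = (s + \<delta>) / (s + \<delta>) + (b + \<delta>) / (s + \<delta>)" by (simp only: one lam_def)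
    also have "\<dots> = ((s + \<delta>) + (b + \<delta>)) / (s + \<delta>)" by (rule add_divide_distrib[symmetric])
    also have "(s + \<delta>) + (b + \<delta>) = s + b + 2 * \<delta>" by simp
    finally show ?thesis .
  qed
  have e2: "1 + 1/lam = (s + b + 2 * \<delta>) / (b + \<delta>)"
  proof -
    have one: "(b + \<delta>) / (b + \<delta>) = 1" using bd by simp
    have il: "1/lam = (s + \<delta>) / (b + \<delta>)" by (simp add: lam_def)
    have "1 + 1/lam = (b + \<delta>) / (b + \<delta>) + (s + \<delta>) / (b + \<delta>)" by (simp only: one il)
    also have "\<dots> = ((b + \<delta>) + (s + \<delta>)) / (b + \<delta>)" by (rule add_divide_distrib[symmetric])
    also have "(b + \<delta>) + (s + \<delta>) = s + b + 2 * \<delta>" by simp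
    finally show ?thesis .
  qed
  have T: "0 \<le> s + b + 2 * \<delta>" using s b \<delta> by simp
  have q1: "s\<^sup>2 / (s + \<delta>) \<le> s"
  proof -
    have "s * \<delta> \<ge> 0" using s \<delta> by simp
    hence "s\<^sup>2 \<le> s * (s + \<delta>)" by (simp add: power2_eq_square distrib_left)
    thus ?thesis using sd by (simp add: pos_divide_le_eq mult.commute)
  qed
  have q2: "b\<^sup>2 / (b + \<delta>) \<le> b"
  proof -
    have "b * \<delta> \<ge> 0" using b \<delta> by simp
    hence "b\<^sup>2 \<le> b * (b + \<delta>)" by (simp add: power2_eq_square distrib_left)
    thus ?thesis using bd by (simp add: pos_divide_le_eq mult.commute)
  qed
  have "(1+lam) * a \<le> (1+lam) * s\<^sup>2" using lam a by (intro mult_left_mono) auto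
  also have "\<dots> = (s + b + 2 * \<delta>) * (s\<^sup>2 / (s + \<delta>))" unfolding e1 by simp
  also have "\<dots> \<le> (s + b + 2 * \<delta>) * s" using q1 T by (intro mult_left_mono) auto
  finally have A: "(1+lam) * a \<le> (s + b + 2 * \<delta>) * s" .
  have "(1+1/lam) * b\<^sup>2 = (s + b + 2 * \<delta>) * (b\<^sup>2 / (b + \<delta>))" unfolding e2 by simp
  also have "\<dots> \<le> (s + b + 2 * \<delta>) * b" using q2 T by (intro mult_left_mono) auto
  finally have B: "(1+1/lam) * b\<^sup>2 \<le> (s + b + 2 * \<delta>) * b" .
  have dl: "(s + b + 2 * \<delta>) * (s + b) = (s + b + 2 * \<delta>) * s + (s + b + 2 * \<delta>) * b" by (rule distrib_left)
  have "k\<^sup>2 \<le> (s + b + 2 * \<delta>) * (s + b)" using H[OF lam] A B dl by linarith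
  also have "\<dots> \<le> (s + b + 2 * \<delta>) * (s + b + 2 * \<delta>)" using T \<delta> by (intro mult_left_mono) auto
  also have "(s + b + 2 * \<delta>) * (s + b + 2 * \<delta>) = (s + b + \<epsilon>)\<^sup>2" by (simp add: \<delta>_def power2_eq_square)
  finally have "k\<^sup>2 \<le> (s + b + \<epsilon>)\<^sup>2" .
  moreover have "0 \<le> s + b + \<epsilon>" using s b \<epsilon> by simp
  ultimately show "k \<le> s + b + \<epsilon>" by (rule power2_le_imp_le)
qed

theorem lemma4:
  fixes \<mu>X \<sigma>X R Rc P :: real and pXh :: "real measure"
  assumes "\<sigma>X > 0" and "R \<ge> 0" and "Rc \<ge> 0" and "P \<ge> 0"
    and "real_distr pXh"
    and "integrable pXh (\<lambda>x. x\<^sup>2)"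
    and "W2sq (gaussian \<mu>X \<sigma>X) pXh \<le> P"
  shows "distortion_rate (R + Rc) pXh \<ge>
    (max 0 (\<sigma>X * exp (-(R + Rc)) - sqrt (P - (\<mu>X - (\<integral>x. x \<partial>pXh))\<^sup>2)))\<^sup>2"
proof -
  interpret S: lsetup \<mu>X \<sigma>X pXh
    using assms(1,5) by (simp add: lsetup_def gauss_def pdist_def)
  note ip = assms(6)
  define r where "r = R + Rc"
  have r0: "r \<ge> 0" using assms(2,3) by (simp add: r_def)
  define m where "m = (\<integral>x. x \<partial>pXh)"
  define c where "c = \<mu>X - m"
  define a where "a = (\<integral>z. (S.Xs z - c - fst z)\<^sup>2 \<partial>S.M0)"
  have iXs: "integrable S.M0 S.Xs" by (rule lin_integrable[OF S.M0_prob _ S.M0_int_Xs_sq]) simp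
  have ifst: "integrable S.M0 fst" by (rule lin_integrable[OF S.M0_prob _ S.M0_int_fst_sq[OF ip]]) simp
  have iA: "integrable S.M0 (\<lambda>z. (S.Xs z - c - fst z)\<^sup>2)"
    using sq_comb_integrable[OF S.M0_prob _ _ S.M0_int_Xs_sq S.M0_int_fst_sq[OF ip], of 1 "-1" "-c"]
    by (simp add: algebra_simps)
  have cstar: "(\<integral>z. (S.Xs z - fst z)\<^sup>2 \<partial>S.M0) = a + c\<^sup>2"
  proof -
    have "(\<integral>z. (S.Xs z - fst z)\<^sup>2 \<partial>S.M0) = (\<integral>z. (S.Xs z - c - fst z)\<^sup>2 + 2 * c * S.Xs z - 2 * c * fst z - c\<^sup>2 \<partial>S.M0)"
      by (intro Bochner_Integration.integral_cong) (auto simp: power2_eq_square algebra_simps)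
    also have "\<dots> = a + 2 * c * \<mu>X - 2 * c * m - c\<^sup>2"
      using iA iXs ifst S.M0_Xs_mean S.M0_fst_mean by (simp add: a_def m_def S.M0.prob_space[unfolded S.M0_space])
    also have "\<dots> = a + c\<^sup>2" by (simp add: c_def power2_eq_square algebra_simps)
    finally show ?thesis .
  qed
  have aP: "a \<le> P - c\<^sup>2" using S.cstar_le[OF ip assms(7)] cstar by simp
  have a0: "0 \<le> a" unfolding a_def by simp
  define s where "s = sqrt (P - c\<^sup>2)"
  have s0: "0 \<le> s" and ss: "a \<le> s\<^sup>2" using aP a0 by (auto simp: s_def)
  define k where "k = \<sigma>X * exp (-r)"
  have k2: "k\<^sup>2 = \<sigma>X\<^sup>2 * exp (-2 * r)"
  proof -
    have "exp (-2 * r) = exp (-r) * exp (-r)"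
    proof -
      have "-2 * r = (-r) + (-r)" by simp
      thus ?thesis by (simp only: exp_add)
    qed
    thus ?thesis by (simp add: k_def power2_eq_square)
  qed
  define Sset where "Sset = {\<integral>x. (fst x - snd x)\<^sup>2 \<partial>\<pi> | \<pi>.
      joint_distr \<pi> \<and> distr \<pi> borel fst = pXh \<and> mutual_info \<pi> \<le> ereal r \<and>
      integrable \<pi> (\<lambda>x. (fst x - snd x)\<^sup>2)}"
  have ne: "Sset \<noteq> {}"
  proof -
    define \<pi>0 where "\<pi>0 = pXh \<Otimes>\<^sub>M pXh"
    interpret PP: pair_prob_space pXh pXh using S.p_prob by (simp add: pair_prob_space_def pair_sigma_finite_def prob_space_imp_sigma_finite)
    have s0[measurable_cong]: "sets \<pi>0 = sets (borel \<Otimes>\<^sub>M borel)" unfolding \<pi>0_def by (intro sets_pair_measure_cong) auto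
    have jd: "joint_distr \<pi>0" unfolding joint_distr_def \<pi>0_def using PP.prob_space_axioms s0 by (simp add: \<pi>0_def)
    have d1: "distr \<pi>0 borel fst = pXh" unfolding \<pi>0_def
      by (rule distr_fst_prod) (auto simp: S.p_prob prob_space_imp_sigma_finite)
    have d2: "distr \<pi>0 borel snd = pXh" unfolding \<pi>0_def
      by (rule distr_snd_prod) (auto simp: S.p_prob prob_space_imp_sigma_finite)
    have mi: "mutual_info \<pi>0 \<le> ereal r"
    proof -
      interpret P0: prob_space \<pi>0 unfolding \<pi>0_def by (rule PP.prob_space_axioms)
      have nu: "distr \<pi>0 borel fst \<Otimes>\<^sub>M distr \<pi>0 borel snd = \<pi>0" unfolding d1 d2 by (simp add: \<pi>0_def)
      have ac: "absolutely_continuous \<pi>0 \<pi>0" by (simp add: absolutely_continuous_def)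
      have ae: "AE x in \<pi>0. 1 = RN_deriv \<pi>0 \<pi>0 x"
        by (rule P0.RN_deriv_unique) (simp_all add: density_1)
      have ae2: "AE x in \<pi>0. ln (enn2real (RN_deriv \<pi>0 \<pi>0 x)) = 0"
        using ae
      proof eventually_elim
        case (elim x)
        hence "RN_deriv \<pi>0 \<pi>0 x = 1" by simp
        thus ?case by simp
      qed
      have il: "integrable \<pi>0 (\<lambda>x. ln (enn2real (RN_deriv \<pi>0 \<pi>0 x)))"
        by (rule integrable_cong_AE_imp[OF integrable_zero _ ae2[THEN AE_mp, OF AE_I2]]) (auto simp: eq_commute[of 0])
      have "(\<integral>x. ln (enn2real (RN_deriv \<pi>0 \<pi>0 x)) \<partial>\<pi>0) = (\<integral>x. 0 \<partial>\<pi>0)"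
        by (rule integral_cong_AE) (use ae2 in auto)
      thus ?thesis unfolding mutual_info_def Let_def nu using ac il r0 by simp
    qed
    have ic: "integrable \<pi>0 (\<lambda>x. (fst x - snd x)\<^sup>2)"
    proof -
      interpret P0: prob_space \<pi>0 unfolding \<pi>0_def by (rule PP.prob_space_axioms)
      have i1: "integrable \<pi>0 (\<lambda>x. (fst x)\<^sup>2)"
        using ip unfolding d1[symmetric] by (subst (asm) integrable_distr_eq) auto
      have i2: "integrable \<pi>0 (\<lambda>x. (snd x)\<^sup>2)"
        using ip unfolding d2[symmetric] by (subst (asm) integrable_distr_eq) auto
      have "integrable \<pi>0 (\<lambda>x. (1 * fst x + (-1) * snd x + 0)\<^sup>2)"
        by (rule sq_comb_integrable[OF P0.prob_space_axioms _ _ i1 i2]) auto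
      thus ?thesis by simp
    qed
    show ?thesis unfolding Sset_def using jd d1 mi ic by blast
  qed
  have lb: "(max 0 (k - s))\<^sup>2 \<le> dd" if dS: "dd \<in> Sset" for dd
  proof -
    obtain \<pi> where dd: "dd = (\<integral>x. (fst x - snd x)\<^sup>2 \<partial>\<pi>)" and jd: "joint_distr \<pi>"
      and fm: "distr \<pi> borel fst = pXh" and mi: "mutual_info \<pi> \<le> ereal r"
      and ic: "integrable \<pi> (\<lambda>x. (fst x - snd x)\<^sup>2)"
      using dS unfolding Sset_def by blast
    have d0: "0 \<le> dd" unfolding dd by simp
    define b where "b = sqrt dd"
    have b0: "0 \<le> b" and bb: "b\<^sup>2 = dd" using d0 by (auto simp: b_def)
    have "k \<le> s + b"
    proof (rule alg1[OF s0 b0 ss])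
      fix lam :: real assume lam: "lam > 0"
      show "k\<^sup>2 \<le> (1 + lam) * a + (1 + 1/lam) * b\<^sup>2"
        using S.pi_bound[OF ip jd fm mi ic lam, of c] k2 bb dd by (simp add: a_def)
    qed
    hence "max 0 (k - s) \<le> b" using b0 by simp
    hence "(max 0 (k - s))\<^sup>2 \<le> b\<^sup>2" by (intro power_mono) auto
    thus ?thesis using bb by simp
  qed
  have "(max 0 (k - s))\<^sup>2 \<le> Inf Sset" by (rule cInf_greatest[OF ne lb])
  moreover have "distortion_rate (R + Rc) pXh = Inf Sset"
    unfolding distortion_rate_def Sset_def r_def ..
  ultimately show ?thesis by (simp add: k_def s_def c_def m_def r_def)
qed

end
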